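(* Assume the generic setting and Conditions (C1) and (C2) below, with step sizes $\alpha_t = a/(u+t)^\gamma$ for some $a>0$, $u>0$ and $\gamma\in[0,1]$. Then there exist constants $I,J,K>0$, independent of $t$ and $z$, such that for all $t\ge 0$ and all $z\ge 0$, $$\mathbb P\big(f(x_{t+1})-f(x^\star)\ge z\big)\le I\,e^{-\frac{J}{\alpha_t}z} \qquad\text{and}\qquad \mathbb E\big[f(x_{t+1})-f(x^\star)\big]\le K\alpha_t .$$ The constants may depend on $a,u,\gamma,\kappa,B,\lambda$, the law of $Y$, and $F$.
   Context: Generic setting. $\mathcal X\subseteq\mathbb R^d$ is a nonempty closed bounded convex set and $f:\mathcal X\to\mathbb R$ is continuous. $x^\star$ is a minimizer of $f$ on $\mathcal X$, and $F:=\max_{\mathcal X}f-\min_{\mathcal X}f$. On a probability space with filtration $(\mathcal F_t)_{t\ge0}$, $(x_t)_{t\ge0}$ is an $\mathcal X$-valued process adapted to $(\mathcal F_t)$. $(\alpha_t)_{t\ge0}$ is a deterministic sequence of positive step sizes. Condition (C1): there exist $\kappa>0$ and $B>0$ such that for every $t\ge0$, almost surely on the event $\{f(x_t)-f(x^\star)\ge \alpha_t B\}$, $$\mathbb E[f(x_{t+1})-f(x_t)\mid\mathcal F_t]\le -2\alpha_t\kappa.$$ Condition (C2): there exist $\lambda>0$ and a nonnegative random variable $Y$ with $\mathbb E[e^{\lambda Y}]<\infty$ such that for every $t\ge0$ and every $y\ge0$, almost surely $$\mathbb P\big(|f(x_{t+1})-f(x_t)|\ge \alpha_t y\mid\mathcal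 F_t\big)\le \mathbb P(Y\ge y).$$ *)

theory Defs
  imports "HOL-Probability.Probability"
begin

end

theory Submission
  imports Defs
begin


lemma exp_quad: "exp (y::real) \<le> 1 + y + y^2/2 * exp (max y 0)"
proof (cases "y \<ge> 0")
  case True
  obtain s where s: "\<bar>s\<bar> \<le> \<bar>y\<bar>" "exp y = (\<Sum>m<2. y^m / fact m) + exp s / fact 2 * y^2"
    using Maclaurin_exp_le[of y 2] by blast
  have "s \<le> y" using s True by linarith
  then have "exp s \<le> exp y" by simp
  then have "exp s / 2 * y^2 \<le> y^2/2 * exp y" by (simp add: mult_right_mono mult.commute)
  then show ?thesis using s True by (simp add: numeral_2_eq_2 max_def)
next
  case False
  obtain s where s: "\<bar>s\<bar> \<le> \<bar>y\<bar>" "exp y = (\<Sum>m<3. y^m / fact m) + exp s / fact 3 * y^3"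
    using Maclaurin_exp_le[of y 3] by blast
  have "y^3 \<le> 0" proof -
    have "y*y \<ge> 0" by simp
    then have "(y*y)*y \<le> 0" using False by (simp add: mult_nonneg_nonpos)
    then show ?thesis by (simp add: power3_eq_cube)
  qed
  then have "exp s / fact 3 * y^3 \<le> 0" by (intro mult_nonneg_nonpos) auto
  then have "exp y \<le> 1 + y + y^2/2" using s by (simp add: numeral_3_eq_3 eval_nat_numeral)
  also have "\<dots> \<le> 1 + y + y^2/2 * exp (max y 0)" using False by simp
  finally show ?thesis .
qed

lemma phi_taylor:
  fixes c d d' Fb :: real
  assumes c: "c > 0" and d: "0 \<le> d" "d \<le> Fb" and d': "0 \<le> d'" "d' \<le> Fb"
  shows "c * (exp (d'/c) - 1) - c * (exp (d/c) - 1) \<le> exp (d/c) * (d' - d) + exp (Fb/c) / (2*c) * (d' - d)^2"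
proof -
  define h where "h = (d' - d)/c"
  have e: "exp (d'/c) = exp (d/c) * exp h" unfolding h_def using c by (simp add: exp_add[symmetric] diff_divide_distrib)
  have q: "exp h \<le> 1 + h + h^2/2 * exp (max h 0)" by (rule exp_quad)
  have "exp (d/c) * exp (max h 0) = exp (max d d' / c)"
    unfolding h_def using c by (auto simp: exp_add[symmetric] max_def field_simps)
  also have "\<dots> \<le> exp (Fb/c)" using c d d' by (simp add: divide_right_mono)
  finally have m: "exp (d/c) * exp (max h 0) \<le> exp (Fb/c)" .
  have "c * (exp (d'/c) - 1) - c * (exp (d/c) - 1) = c * exp (d/c) * (exp h - 1)"
    by (simp add: e algebra_simps)
  also have "\<dots> \<le> c * exp (d/c) * (h + h^2/2 * exp (max h 0))"
    using q c by (intro mult_left_mono) auto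
  also have "\<dots> = exp (d/c) * (d' - d) + (exp (d/c) * exp (max h 0)) / (2*c) * (d' - d)^2"
    unfolding h_def using c by (simp add: field_simps power2_eq_square)
  also have "\<dots> \<le> exp (d/c) * (d' - d) + exp (Fb/c) / (2*c) * (d' - d)^2"
    using m c by (intro add_left_mono mult_right_mono divide_right_mono) auto
  finally show ?thesis .
qed

lemma powr_sub_le:
  fixes x g :: real assumes x: "0 \<le> x" and g: "0 \<le> g" "g \<le> 1"
  shows "(x+1) powr g \<le> x powr g + 1"
proof (cases "x \<le> 1")
  case True
  have "(x+1) powr g \<le> (x+1) powr 1" using x g by (intro powr_mono) auto
  also have "\<dots> = x + 1" using x by simp
  also have "x \<le> x powr g"
  proof (cases "x = 0")
    case False
    then have "x powr 1 \<le> x powr g" using x True g by (intro powr_mono') auto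
    then show ?thesis using x by simp
  qed simp
  finally show ?thesis by simp
next
  case False
  have xe: "x + 1 = x * (1 + 1/x)" using False by (simp add: field_simps)
  have "(x+1) powr g = x powr g * (1 + 1/x) powr g" using False
    by (subst xe, subst powr_mult) auto
  also have "(1 + 1/x) powr g \<le> (1+1/x) powr 1" using False g by (intro powr_mono) auto
  also have "\<dots> = 1 + 1/x" using False by simp
  also have "x powr g * (1 + 1/x) = x powr g + x powr g / x" by (simp add: field_simps)
  also have "x powr g / x \<le> 1"
  proof -
    have "x powr g \<le> x powr 1" using False g by (intro powr_mono) auto
    then show ?thesis using False by simp
  qed
  finally show ?thesis using False by (simp add: mult_left_mono)
qed




lemma exp_rep:
  fixes lam w :: real assumes "lam > 0" "w \<ge> 0"
  shows "ennreal (exp (lam*w)) = 1 + (\<integral>\<^sup>+y. ennreal (lam * exp (lam*y)) * indicator {0..w} y \<partial>lborel)"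
proof -
  have "(\<integral>\<^sup>+y. ennreal (lam * exp (lam*y)) * indicator {0..w} y \<partial>lborel) = ennreal (exp (lam*w) - exp (lam*0))"
    using assms by (intro nn_integral_FTC_Icc) (auto intro!: derivative_eq_intros)
  moreover have "exp (lam*w) \<ge> 1" using assms by simp
  moreover have "1 + ennreal (exp (lam*w) - 1) = ennreal (1 + (exp (lam*w) - 1))"
    using calculation(2) by (subst ennreal_plus) auto
  ultimately show ?thesis by simp
qed

locale drift_setting =
  fixes M :: "'w measure" and Fl :: "nat \<Rightarrow> 'w measure" and D :: "nat \<Rightarrow> 'w \<Rightarrow> real"
    and \<alpha> :: "nat \<Rightarrow> real" and a u \<gamma> \<kappa> B lam Fb :: real
    and N :: "'v measure" and Y :: "'v \<Rightarrow> real"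
  assumes M: "prob_space M" and N: "prob_space N"
    and sub: "\<And>t. subalgebra M (Fl t)"
    and Dmeas: "\<And>t. D t \<in> borel_measurable (Fl t)"
    and Dnn: "\<And>t \<omega>. \<omega> \<in> space M \<Longrightarrow> 0 \<le> D t \<omega>"
    and Dle: "\<And>t \<omega>. \<omega> \<in> space M \<Longrightarrow> D t \<omega> \<le> Fb"
    and Fb: "Fb > 0"
    and a: "a > 0" and u: "u > 0" and g0: "0 \<le> \<gamma>" and g1: "\<gamma> \<le> 1"
    and alpha: "\<And>t. \<alpha> t = a / (u + real t) powr \<gamma>"
    and kappa: "\<kappa> > 0" and B: "B > 0"
    and C1: "\<And>t. AE \<omega> in M. \<alpha> t * B \<le> D t \<omega> \<longrightarrow>
          real_cond_exp M (Fl t) (\<lambda>\<omega>. D (Suc t) \<omega> - D t \<omega>) \<omega> \<le> - 2 * \<alpha> t * \<kappa>"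
    and lam: "lam > 0" and Ym: "Y \<in> borel_measurable N"
    and Ynn: "\<And>\<omega>. \<omega> \<in> space N \<Longrightarrow> Y \<omega> \<ge> 0"
    and Yint: "(\<integral>\<^sup>+ \<omega>. ennreal (exp (lam * Y \<omega>)) \<partial>N) < \<infinity>"
    and C2: "\<And>t y. y \<ge> 0 \<Longrightarrow> AE \<omega> in M.
          real_cond_exp M (Fl t)
            (indicator {\<omega>' \<in> space M. \<alpha> t * y \<le> \<bar>D (Suc t) \<omega>' - D t \<omega>'\<bar>}) \<omega>
          \<le> measure N {\<omega>' \<in> space N. y \<le> Y \<omega>'}"
begin

sublocale M: prob_space M by (rule M)
sublocale N: prob_space N by (rule N)

lemma alpha_pos: "\<alpha> t > 0"
  using a u by (simp add: alpha)

lemma DmeasM[measurable]: "D t \<in> borel_measurable M"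
  by (rule measurable_from_subalg[OF sub Dmeas])

lemma sfs: "sigma_finite_subalgebra M (Fl t)"
proof -
  have "space M \<in> sets (Fl t)" using sub[of t] unfolding subalgebra_def by (metis sets.top)
  then have "emeasure (restr_to_subalg M (Fl t)) (space (restr_to_subalg M (Fl t))) \<noteq> \<infinity>"
    by (simp add: space_restr_to_subalg emeasure_restr_to_subalg[OF sub])
  then have "finite_measure (restr_to_subalg M (Fl t))" by (rule finite_measureI)
  then have "sigma_finite_measure (restr_to_subalg M (Fl t))"
    by (simp add: finite_measure_def)
  then show ?thesis using sub by (simp add: sigma_finite_subalgebra_def)
qed

lemma Ym'[measurable]: "Y \<in> borel_measurable N" by (rule Ym)

lemma EL_int: "integrable N (\<lambda>\<nu>. exp (lam * Y \<nu>))"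
  using Yint by (intro integrableI_nonneg) (auto simp: Ym)

lemma tail_weighted:
  assumes Zm: "Z \<in> borel_measurable (Fl t)" and Z0: "\<And>\<omega>. \<omega> \<in> space M \<Longrightarrow> 0 \<le> Z \<omega>"
    and Zb: "\<And>\<omega>. \<omega> \<in> space M \<Longrightarrow> Z \<omega> \<le> Zmax"
  shows "(\<integral>\<^sup>+\<omega>. ennreal (Z \<omega>) * indicator {\<omega> \<in> space M. \<alpha> t * y \<le> \<bar>D (Suc t) \<omega> - D t \<omega>\<bar>} \<omega> \<partial>M)
     \<le> ennreal (\<integral>\<omega>. Z \<omega> \<partial>M) * ennreal (measure N {\<nu> \<in> space N. y \<le> Y \<nu>})"
proof -
  define S where "S = {\<omega> \<in> space M. \<alpha> t * y \<le> \<bar>D (Suc t) \<omega> - D t \<omega>\<bar>}"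
  have ZmM[measurable]: "Z \<in> borel_measurable M" by (rule measurable_from_subalg[OF sub Zm])
  have Sm[measurable]: "S \<in> sets M" unfolding S_def by measurable
  have intZ: "integrable M Z"
    by (rule M.integrable_const_bound[where B=Zmax]) (auto simp: Z0 Zb intro!: AE_I2)
  have int1: "integrable M (\<lambda>\<omega>. Z \<omega> * indicator S \<omega>)"
    by (rule M.integrable_const_bound[where B="max Zmax 0"]) (auto simp: Z0 Zb intro!: AE_I2 max.coboundedI1 split: split_indicator)
  have Zpos: "0 \<le> (\<integral>\<omega>. Z \<omega> \<partial>M)" by (rule integral_nonneg_AE) (auto simp: Z0 intro!: AE_I2)
  have nn: "(\<integral>\<^sup>+\<omega>. ennreal (Z \<omega>) * indicator S \<omega> \<partial>M) = ennreal (\<integral>\<omega>. Z \<omega> * indicator S \<omega> \<partial>M)"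
  proof -
    have "(\<integral>\<^sup>+\<omega>. ennreal (Z \<omega>) * indicator S \<omega> \<partial>M) = (\<integral>\<^sup>+\<omega>. ennreal (Z \<omega> * indicator S \<omega>) \<partial>M)"
      by (intro nn_integral_cong) (auto split: split_indicator)
    also have "\<dots> = ennreal (\<integral>\<omega>. Z \<omega> * indicator S \<omega> \<partial>M)"
      by (rule nn_integral_eq_integral[OF int1]) (auto simp: Z0 intro!: AE_I2 split: split_indicator)
    finally show ?thesis .
  qed
  show ?thesis
  proof (cases "y \<ge> 0")
    case False
    have "S = space M"
    proof -
      have "\<alpha> t * y < 0" using False alpha_pos[of t] by (simp add: mult_pos_neg)
      then show ?thesis unfolding S_def by (auto intro: order_trans[OF _ abs_ge_zero])
    qed
    moreover have "{\<nu> \<in> space N. y \<le> Y \<nu>} = space N" using False Ynn by force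
    ultimately have "(\<integral>\<omega>. Z \<omega> * indicator S \<omega> \<partial>M) = (\<integral>\<omega>. Z \<omega> \<partial>M)"
      "measure N {\<nu> \<in> space N. y \<le> Y \<nu>} = 1"
      by (auto intro!: Bochner_Integration.integral_cong simp: N.prob_space)
    then show ?thesis using nn unfolding S_def by simp
  next
    case True
    interpret sigma_finite_subalgebra M "Fl t" by (rule sfs)
    define p where "p = measure N {\<nu> \<in> space N. y \<le> Y \<nu>}"
    have eq: "(\<integral>\<omega>. Z \<omega> * real_cond_exp M (Fl t) (indicator S) \<omega> \<partial>M) = (\<integral>\<omega>. Z \<omega> * indicator S \<omega> \<partial>M)"
      and int2: "integrable M (\<lambda>\<omega>. Z \<omega> * real_cond_exp M (Fl t) (indicator S) \<omega>)"
      using real_cond_exp_intg[OF int1 Zm] by auto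
    have "(\<integral>\<omega>. Z \<omega> * real_cond_exp M (Fl t) (indicator S) \<omega> \<partial>M) \<le> (\<integral>\<omega>. Z \<omega> * p \<partial>M)"
    proof (rule integral_mono_AE[OF int2])
      show "integrable M (\<lambda>\<omega>. Z \<omega> * p)" using intZ by simp
      show "AE \<omega> in M. Z \<omega> * real_cond_exp M (Fl t) (indicator S) \<omega> \<le> Z \<omega> * p"
        using C2[OF True, of t] AE_space unfolding S_def[symmetric] p_def[symmetric]
        by eventually_elim (auto intro!: mult_left_mono Z0)
    qed
    also have "\<dots> = (\<integral>\<omega>. Z \<omega> \<partial>M) * p" by simp
    finally have "(\<integral>\<omega>. Z \<omega> * indicator S \<omega> \<partial>M) \<le> (\<integral>\<omega>. Z \<omega> \<partial>M) * p" using eq by simp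
    then have "ennreal (\<integral>\<omega>. Z \<omega> * indicator S \<omega> \<partial>M) \<le> ennreal ((\<integral>\<omega>. Z \<omega> \<partial>M) * p)"
      by (rule ennreal_leI)
    also have "\<dots> = ennreal (\<integral>\<omega>. Z \<omega> \<partial>M) * ennreal p" using Zpos by (simp add: ennreal_mult p_def)
    finally show ?thesis using nn unfolding S_def p_def by simp
  qed
qed

lemma KL:
  assumes Zm: "Z \<in> borel_measurable (Fl t)" and Z0: "\<And>\<omega>. \<omega> \<in> space M \<Longrightarrow> 0 \<le> Z \<omega>"
    and Zb: "\<And>\<omega>. \<omega> \<in> space M \<Longrightarrow> Z \<omega> \<le> Zmax"
  shows "(\<integral>\<omega>. Z \<omega> * exp (lam * (\<bar>D (Suc t) \<omega> - D t \<omega>\<bar> / \<alpha> t)) \<partial>M)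
     \<le> (\<integral>\<omega>. Z \<omega> \<partial>M) * (\<integral>\<nu>. exp (lam * Y \<nu>) \<partial>N)"
proof -
  define h where "h \<omega> = \<bar>D (Suc t) \<omega> - D t \<omega>\<bar> / \<alpha> t" for \<omega>
  define g where "g y = lam * exp (lam * y)" for y :: real
  define E where "E = (\<integral>\<nu>. exp (lam * Y \<nu>) \<partial>N)"
  define G where "G \<omega> y = ennreal (Z \<omega>) * ennreal (g y) * (if 0 \<le> y \<and> y \<le> h \<omega> then 1 else 0)" for \<omega> y
  define H where "H \<nu> y = ennreal (g y) * (if 0 \<le> y \<and> y \<le> Y \<nu> then 1 else 0)" for \<nu> y
  have ZmM[measurable]: "Z \<in> borel_measurable M" by (rule measurable_from_subalg[OF sub Zm])
  have hm[measurable]: "h \<in> borel_measurable M" unfolding h_def by measurable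
  have h0: "0 \<le> h \<omega>" for \<omega> unfolding h_def using alpha_pos[of t] by simp
  have hb: "h \<omega> \<le> Fb / \<alpha> t" if "\<omega> \<in> space M" for \<omega>
  proof -
    have "\<bar>D (Suc t) \<omega> - D t \<omega>\<bar> \<le> Fb"
      using Dnn[OF that, of t] Dle[OF that, of t] Dnn[OF that, of "Suc t"] Dle[OF that, of "Suc t"] by linarith
    then show ?thesis unfolding h_def using alpha_pos[of t] by (intro divide_right_mono) auto
  qed
  have gm[measurable]: "g \<in> borel_measurable borel" unfolding g_def by measurable
  have Gm[measurable]: "case_prod G \<in> borel_measurable (M \<Otimes>\<^sub>M lborel)" unfolding G_def by measurable
  have Hm[measurable]: "case_prod H \<in> borel_measurable (N \<Otimes>\<^sub>M lborel)" unfolding H_def by measurable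
  interpret P1: pair_sigma_finite M lborel
    unfolding pair_sigma_finite_def using M.sigma_finite_measure_axioms lborel.sigma_finite_measure_axioms by simp
  interpret P2: pair_sigma_finite N lborel
    unfolding pair_sigma_finite_def using N.sigma_finite_measure_axioms lborel.sigma_finite_measure_axioms by simp
  have intZ: "integrable M Z"
    by (rule M.integrable_const_bound[where B=Zmax]) (auto simp: Z0 Zb intro!: AE_I2)
  have Zpos: "0 \<le> (\<integral>\<omega>. Z \<omega> \<partial>M)" by (rule integral_nonneg_AE) (auto simp: Z0 intro!: AE_I2)
  have intL: "integrable M (\<lambda>\<omega>. Z \<omega> * exp (lam * h \<omega>))"
  proof (rule M.integrable_const_bound[where B="Zmax * exp (lam * (Fb / \<alpha> t))"])
    show "AE \<omega> in M. norm (Z \<omega> * exp (lam * h \<omega>)) \<le> Zmax * exp (lam * (Fb / \<alpha> t))"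
    proof (rule AE_I2)
      fix \<omega> assume w: "\<omega> \<in> space M"
      have "lam * h \<omega> \<le> lam * (Fb / \<alpha> t)" using hb[OF w] lam by (intro mult_left_mono) auto
      then have "exp (lam * h \<omega>) \<le> exp (lam * (Fb / \<alpha> t))" by simp
      then show "norm (Z \<omega> * exp (lam * h \<omega>)) \<le> Zmax * exp (lam * (Fb / \<alpha> t))"
        using Z0[OF w] Zb[OF w] by (simp add: abs_mult) (intro mult_mono, auto)
    qed
  qed simp
  have eqZ: "(\<integral>\<^sup>+\<omega>. ennreal (Z \<omega>) \<partial>M) = ennreal (\<integral>\<omega>. Z \<omega> \<partial>M)"
    by (rule nn_integral_eq_integral[OF intZ]) (auto simp: Z0 intro!: AE_I2)
  have "ennreal (\<integral>\<omega>. Z \<omega> * exp (lam * h \<omega>) \<partial>M) = (\<integral>\<^sup>+\<omega>. ennreal (Z \<omega> * exp (lam * h \<omega>)) \<partial>M)"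
    by (rule nn_integral_eq_integral[OF intL, symmetric]) (auto simp: Z0 intro!: AE_I2)
  also have "\<dots> = (\<integral>\<^sup>+\<omega>. ennreal (Z \<omega>) + (\<integral>\<^sup>+y. G \<omega> y \<partial>lborel) \<partial>M)"
  proof (rule nn_integral_cong)
    fix \<omega> assume w: "\<omega> \<in> space M"
    have "ennreal (Z \<omega> * exp (lam * h \<omega>)) = ennreal (Z \<omega>) * ennreal (exp (lam * h \<omega>))"
      using Z0[OF w] by (simp add: ennreal_mult)
    also have "\<dots> = ennreal (Z \<omega>) * (1 + (\<integral>\<^sup>+y. ennreal (g y) * indicator {0..h \<omega>} y \<partial>lborel))"
      unfolding g_def using exp_rep[OF lam h0] by simp
    also have "\<dots> = ennreal (Z \<omega>) + (\<integral>\<^sup>+y. ennreal (Z \<omega>) * (ennreal (g y) * indicator {0..h \<omega>} y) \<partial>lborel)"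
      by (simp add: distrib_left nn_integral_cmult)
    also have "(\<integral>\<^sup>+y. ennreal (Z \<omega>) * (ennreal (g y) * indicator {0..h \<omega>} y) \<partial>lborel) = (\<integral>\<^sup>+y. G \<omega> y \<partial>lborel)"
      unfolding G_def by (intro nn_integral_cong) (auto split: split_indicator)
    finally show "ennreal (Z \<omega> * exp (lam * h \<omega>)) = ennreal (Z \<omega>) + (\<integral>\<^sup>+y. G \<omega> y \<partial>lborel)" .
  qed
  also have "\<dots> = ennreal (\<integral>\<omega>. Z \<omega> \<partial>M) + (\<integral>\<^sup>+\<omega>. (\<integral>\<^sup>+y. G \<omega> y \<partial>lborel) \<partial>M)"
    by (subst nn_integral_add) (auto simp: eqZ)
  also have "(\<integral>\<^sup>+\<omega>. (\<integral>\<^sup>+y. G \<omega> y \<partial>lborel) \<partial>M) = (\<integral>\<^sup>+y. (\<integral>\<^sup>+\<omega>. G \<omega> y \<partial>M) \<partial>lborel)"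
    by (rule P1.Fubini'[symmetric]) simp
  also have "\<dots> \<le> (\<integral>\<^sup>+y. ennreal (\<integral>\<omega>. Z \<omega> \<partial>M) * (\<integral>\<^sup>+\<nu>. H \<nu> y \<partial>N) \<partial>lborel)"
  proof (rule nn_integral_mono)
    fix y :: real
    have "(\<integral>\<^sup>+\<omega>. G \<omega> y \<partial>M) = (\<integral>\<^sup>+\<omega>. ennreal (g y) * indicator {0..} y *
        (ennreal (Z \<omega>) * indicator {\<omega> \<in> space M. \<alpha> t * y \<le> \<bar>D (Suc t) \<omega> - D t \<omega>\<bar>} \<omega>) \<partial>M)"
    proof (rule nn_integral_cong)
      fix \<omega> assume w: "\<omega> \<in> space M"
      have "(y \<le> h \<omega>) = (\<alpha> t * y \<le> \<bar>D (Suc t) \<omega> - D t \<omega>\<bar>)"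
        unfolding h_def using alpha_pos[of t] by (simp add: field_simps)
      then show "G \<omega> y = ennreal (g y) * indicator {0..} y *
        (ennreal (Z \<omega>) * indicator {\<omega> \<in> space M. \<alpha> t * y \<le> \<bar>D (Suc t) \<omega> - D t \<omega>\<bar>} \<omega>)"
        unfolding G_def using w by (auto split: split_indicator simp: mult_ac)
    qed
    also have "\<dots> = ennreal (g y) * indicator {0..} y * (\<integral>\<^sup>+\<omega>. ennreal (Z \<omega>) *
        indicator {\<omega> \<in> space M. \<alpha> t * y \<le> \<bar>D (Suc t) \<omega> - D t \<omega>\<bar>} \<omega> \<partial>M)"
      by (rule nn_integral_cmult) measurable
    also have "\<dots> \<le> ennreal (g y) * indicator {0..} y * (ennreal (\<integral>\<omega>. Z \<omega> \<partial>M) *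
        ennreal (measure N {\<nu> \<in> space N. y \<le> Y \<nu>}))"
      by (intro mult_left_mono tail_weighted[OF Zm Z0 Zb]) auto
    also have "\<dots> = ennreal (\<integral>\<omega>. Z \<omega> \<partial>M) * (\<integral>\<^sup>+\<nu>. H \<nu> y \<partial>N)"
    proof -
      have "(\<integral>\<^sup>+\<nu>. H \<nu> y \<partial>N) = (\<integral>\<^sup>+\<nu>. (ennreal (g y) * indicator {0..} y) * indicator {\<nu> \<in> space N. y \<le> Y \<nu>} \<nu> \<partial>N)"
        unfolding H_def using Ynn by (intro nn_integral_cong) (auto split: split_indicator)
      also have "\<dots> = ennreal (g y) * indicator {0..} y * emeasure N {\<nu> \<in> space N. y \<le> Y \<nu>}"
        by (rule nn_integral_cmult_indicator) measurable
      finally show ?thesis by (simp add: N.emeasure_eq_measure mult_ac)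
    qed
    finally show "(\<integral>\<^sup>+\<omega>. G \<omega> y \<partial>M) \<le> ennreal (\<integral>\<omega>. Z \<omega> \<partial>M) * (\<integral>\<^sup>+\<nu>. H \<nu> y \<partial>N)" .
  qed
  also have "\<dots> = ennreal (\<integral>\<omega>. Z \<omega> \<partial>M) * (\<integral>\<^sup>+y. (\<integral>\<^sup>+\<nu>. H \<nu> y \<partial>N) \<partial>lborel)"
    by (rule nn_integral_cmult) measurable
  also have "(\<integral>\<^sup>+y. (\<integral>\<^sup>+\<nu>. H \<nu> y \<partial>N) \<partial>lborel) = (\<integral>\<^sup>+\<nu>. (\<integral>\<^sup>+y. H \<nu> y \<partial>lborel) \<partial>N)"
    by (rule P2.Fubini') simp
  finally have 1: "ennreal (\<integral>\<omega>. Z \<omega> * exp (lam * h \<omega>) \<partial>M) \<le>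
     ennreal (\<integral>\<omega>. Z \<omega> \<partial>M) * (1 + (\<integral>\<^sup>+\<nu>. (\<integral>\<^sup>+y. H \<nu> y \<partial>lborel) \<partial>N))"
    by (simp add: distrib_left)
  have "1 + (\<integral>\<^sup>+\<nu>. (\<integral>\<^sup>+y. H \<nu> y \<partial>lborel) \<partial>N) = (\<integral>\<^sup>+\<nu>. 1 + (\<integral>\<^sup>+y. H \<nu> y \<partial>lborel) \<partial>N)"
    by (subst nn_integral_add) (auto simp: N.emeasure_space_1)
  also have "\<dots> = (\<integral>\<^sup>+\<nu>. ennreal (exp (lam * Y \<nu>)) \<partial>N)"
  proof (rule nn_integral_cong)
    fix \<nu> assume v: "\<nu> \<in> space N"
    have "(\<integral>\<^sup>+y. H \<nu> y \<partial>lborel) = (\<integral>\<^sup>+y. ennreal (g y) * indicator {0..Y \<nu>} y \<partial>lborel)"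
      unfolding H_def by (intro nn_integral_cong) (auto split: split_indicator)
    then show "1 + (\<integral>\<^sup>+y. H \<nu> y \<partial>lborel) = ennreal (exp (lam * Y \<nu>))"
      unfolding g_def using exp_rep[OF lam Ynn[OF v]] by simp
  qed
  also have "\<dots> = ennreal E" unfolding E_def
    by (rule nn_integral_eq_integral[OF EL_int]) (auto intro!: AE_I2)
  finally have 2: "1 + (\<integral>\<^sup>+\<nu>. (\<integral>\<^sup>+y. H \<nu> y \<partial>lborel) \<partial>N) = ennreal E" .
  have E0: "0 \<le> E" unfolding E_def by (intro integral_nonneg_AE) auto
  have "ennreal (\<integral>\<omega>. Z \<omega> * exp (lam * h \<omega>) \<partial>M) \<le> ennreal ((\<integral>\<omega>. Z \<omega> \<partial>M) * E)"
    using 1 2 by (simp add: ennreal_mult[OF Zpos E0])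
  moreover have "0 \<le> (\<integral>\<omega>. Z \<omega> \<partial>M) * E" using Zpos E0 by simp
  ultimately show ?thesis unfolding h_def E_def by (simp add: ennreal_le_iff)
qed

end



definition phi :: "real \<Rightarrow> real \<Rightarrow> real" where "phi c d = c * (exp (d/c) - 1)"

lemma phi_ge: "c > 0 \<Longrightarrow> d \<le> phi c d"
  unfolding phi_def using exp_ge_add_one_self[of "d/c"] by (simp add: field_simps)

lemma phi_nonneg: "c > 0 \<Longrightarrow> 0 \<le> d \<Longrightarrow> 0 \<le> phi c d"
  using phi_ge[of c d] by linarith

lemma phi_le_c: "c > 0 \<Longrightarrow> phi c d \<le> c * exp (d/c)"
  unfolding phi_def by simp

lemma phi_le_L: assumes "c > 0" "0 \<le> d" "d \<le> Fb" shows "phi c d \<le> exp (Fb/c) * d"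
proof -
  have "1 - d/c \<le> exp (- (d/c))" using exp_ge_add_one_self[of "-(d/c)"] by simp
  then have "exp (d/c) * (1 - d/c) \<le> exp (d/c) * exp (-(d/c))" by (intro mult_left_mono) auto
  then have "exp (d/c) - 1 \<le> exp (d/c) * (d/c)" by (simp add: exp_minus field_simps)
  then have "phi c d \<le> exp (d/c) * d" unfolding phi_def using assms by (simp add: field_simps)
  also have "\<dots> \<le> exp (Fb/c) * d" using assms by (intro mult_right_mono) (auto simp: divide_right_mono)
  finally show ?thesis .
qed

lemma bounded_integrable:
  assumes "prob_space M" "f \<in> borel_measurable M" "\<And>\<omega>. \<omega> \<in> space M \<Longrightarrow> \<bar>f \<omega>\<bar> \<le> K"
  shows "integrable M (f :: _ \<Rightarrow> real)"
proof -
  interpret prob_space M by fact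
  show ?thesis by (rule integrable_const_bound[where B=K]) (use assms in \<open>auto intro!: AE_I2\<close>)
qed

context drift_setting begin

lemma ratio: "1 \<le> \<alpha> t / \<alpha> (Suc t)" "\<alpha> t / \<alpha> (Suc t) \<le> 1 + 1/u"
  "1 / \<alpha> (Suc t) - 1 / \<alpha> t \<le> 1 / a"
proof -
  have p: "u + real t > 0" using u by simp
  have q: "\<alpha> t / \<alpha> (Suc t) = ((u + real t + 1) / (u + real t)) powr \<gamma>"
    using a p by (simp add: alpha powr_divide field_simps)
  have b1: "1 \<le> (u + real t + 1) / (u + real t)" using p by simp
  show "1 \<le> \<alpha> t / \<alpha> (Suc t)" unfolding q using b1 g0 by (simp add: ge_one_powr_ge_zero)
  have "((u + real t + 1) / (u + real t)) powr \<gamma> \<le> ((u + real t + 1) / (u + real t)) powr 1"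
    using b1 g1 by (intro powr_mono) auto
  also have "\<dots> = 1 + 1 / (u + real t)" using p by (simp add: field_simps)
  also have "\<dots> \<le> 1 + 1/u" using u by (simp add: frac_le)
  finally show "\<alpha> t / \<alpha> (Suc t) \<le> 1 + 1/u" unfolding q .
  have "1 / \<alpha> (Suc t) - 1 / \<alpha> t = ((u + real t + 1) powr \<gamma> - (u + real t) powr \<gamma>) / a"
    using a by (simp add: alpha diff_divide_distrib add_ac)
  also have "\<dots> \<le> 1 / a" using powr_sub_le[of "u + real t" \<gamma>] p g0 g1 a
    by (intro divide_right_mono) auto
  finally show "1 / \<alpha> (Suc t) - 1 / \<alpha> t \<le> 1 / a" .
qed

lemma drift_weighted:
  assumes Zm: "Z \<in> borel_measurable (Fl t)" and Z0: "\<And>\<omega>. \<omega> \<in> space M \<Longrightarrow> 0 \<le> Z \<omega>"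
    and Zb: "\<And>\<omega>. \<omega> \<in> space M \<Longrightarrow> Z \<omega> \<le> Zmax"
    and Zs: "\<And>\<omega>. \<omega> \<in> space M \<Longrightarrow> D t \<omega> < \<alpha> t * B \<Longrightarrow> Z \<omega> = 0"
  shows "(\<integral>\<omega>. Z \<omega> * (D (Suc t) \<omega> - D t \<omega>) \<partial>M) \<le> - 2 * \<alpha> t * \<kappa> * (\<integral>\<omega>. Z \<omega> \<partial>M)"
proof -
  interpret sigma_finite_subalgebra M "Fl t" by (rule sfs)
  have ZmM[measurable]: "Z \<in> borel_measurable M" by (rule measurable_from_subalg[OF sub Zm])
  have intZ: "integrable M Z"
    by (rule M.integrable_const_bound[where B=Zmax]) (auto simp: Z0 Zb intro!: AE_I2)
  have int1: "integrable M (\<lambda>\<omega>. Z \<omega> * (D (Suc t) \<omega> - D t \<omega>))"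
  proof (rule bounded_integrable[OF M _, where K="Zmax * Fb"])
    fix \<omega> assume w: "\<omega> \<in> space M"
    have "\<bar>D (Suc t) \<omega> - D t \<omega>\<bar> \<le> Fb"
      using Dnn[OF w, of t] Dle[OF w, of t] Dnn[OF w, of "Suc t"] Dle[OF w, of "Suc t"] by linarith
    then show "\<bar>Z \<omega> * (D (Suc t) \<omega> - D t \<omega>)\<bar> \<le> Zmax * Fb"
      using Z0[OF w] Zb[OF w] by (simp add: abs_mult mult_mono)
  qed measurable
  have eq: "(\<integral>\<omega>. Z \<omega> * real_cond_exp M (Fl t) (\<lambda>\<omega>. D (Suc t) \<omega> - D t \<omega>) \<omega> \<partial>M) = (\<integral>\<omega>. Z \<omega> * (D (Suc t) \<omega> - D t \<omega>) \<partial>M)"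
    and int2: "integrable M (\<lambda>\<omega>. Z \<omega> * real_cond_exp M (Fl t) (\<lambda>\<omega>. D (Suc t) \<omega> - D t \<omega>) \<omega>)"
    using real_cond_exp_intg[OF int1 Zm] by auto
  have "(\<integral>\<omega>. Z \<omega> * real_cond_exp M (Fl t) (\<lambda>\<omega>. D (Suc t) \<omega> - D t \<omega>) \<omega> \<partial>M) \<le> (\<integral>\<omega>. Z \<omega> * (- 2 * \<alpha> t * \<kappa>) \<partial>M)"
  proof (rule integral_mono_AE[OF int2])
    show "integrable M (\<lambda>\<omega>. Z \<omega> * (- 2 * \<alpha> t * \<kappa>))" using intZ by simp
    show "AE \<omega> in M. Z \<omega> * real_cond_exp M (Fl t) (\<lambda>\<omega>. D (Suc t) \<omega> - D t \<omega>) \<omega> \<le> Z \<omega> * (- 2 * \<alpha> t * \<kappa>)"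
      using C1[of t] AE_space
    proof eventually_elim
      case (elim \<omega>)
      show ?case
      proof (cases "\<alpha> t * B \<le> D t \<omega>")
        case True
        then have "real_cond_exp M (Fl t) (\<lambda>\<omega>. D (Suc t) \<omega> - D t \<omega>) \<omega> \<le> - 2 * \<alpha> t * \<kappa>" using elim by auto
        then show ?thesis using elim Z0 by (intro mult_left_mono) auto
      next
        case False then show ?thesis using elim Zs by auto
      qed
    qed
  qed
  also have "\<dots> = - 2 * \<alpha> t * \<kappa> * (\<integral>\<omega>. Z \<omega> \<partial>M)" by (simp add: mult.commute)
  finally show ?thesis using eq by simp
qed

end



lemma sq_le_exp:
  fixes w lam :: real assumes "lam > 0"
  shows "w^2 \<le> 32 / lam^2 * exp (lam * \<bar>w\<bar> / 4)"
proof -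
  define s where "s = lam * \<bar>w\<bar> / 4"
  have s0: "s \<ge> 0" unfolding s_def using assms by simp
  have "s^2/2 \<le> exp s" using exp_lower_Taylor_quadratic[OF s0] s0 by simp
  moreover have "s^2/2 = lam^2 * w^2 / 32" unfolding s_def by (simp add: power2_eq_square field_simps)
  ultimately have "lam^2 * w^2 \<le> 32 * exp s" by simp
  then show ?thesis unfolding s_def[symmetric] using assms by (simp add: field_simps)
qed

lemma pw_A:
  fixes a \<kappa> lam Fb \<eta> d d' al al' r0 :: real
  defines "c \<equiv> a * \<kappa> / 2"
  defines "L \<equiv> exp (Fb / c)"
  defines "K2 \<equiv> 32 / lam^2"
  defines "G \<equiv> r0 * L * (1 + Fb / (2*c))"
  defines "W \<equiv> (d' - d) / al"
  defines "Q \<equiv> \<eta> * r0 * (L / (2*c)) * al * K2 + \<eta>^2 * G^2 * K2 / 2"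
  assumes a: "a > 0" and k: "\<kappa> > 0" and lam: "lam > 0" and eta: "\<eta> > 0" "\<eta> * G \<le> lam / 2"
    and d: "0 \<le> d" "d \<le> Fb" and d': "0 \<le> d'" "d' \<le> Fb"
    and al: "al > 0" "al' > 0" and r: "1 \<le> al / al'" "al / al' \<le> r0"
    and dl: "1 / al' - 1 / al \<le> 1 / a"
  shows "exp (\<eta> * phi c d' / al') \<le> exp (\<eta> * phi c d / al) * exp (\<eta> * \<kappa> * exp (d/c) / 2) *
     (1 + \<eta> * (al / al') * exp (d/c) * W + Q * exp (lam * \<bar>W\<bar>))"
proof -
  define r where "r = al / al'"
  define e where "e = exp (d/c)"
  have c: "c > 0" unfolding c_def using a k by simp
  have e1: "1 \<le> e" unfolding e_def using d c by simp
  have eL: "e \<le> L" unfolding e_def L_def using d c by (simp add: divide_right_mono)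
  have L1: "1 \<le> L" using e1 eL by simp
  have r0: "r0 \<ge> 1" using r by simp
  have Fb0: "0 \<le> Fb" using d by simp
  have G0: "G \<ge> r0 * L"
  proof -
    have "r0 * L * 1 \<le> r0 * L * (1 + Fb / (2 * c))" using r0 L1 c Fb0 by (intro mult_left_mono) auto
    then show ?thesis by (simp add: G_def)
  qed
  have dW: "d' - d = al * W" unfolding W_def using al by simp
  have absd: "\<bar>d' - d\<bar> \<le> Fb" using d d' by linarith
  have t1: "phi c d * (1/al' - 1/al) \<le> \<kappa> * e / 2"
  proof -
    have "phi c d * (1/al' - 1/al) \<le> phi c d * (1/a)" using phi_nonneg[OF c d(1)] dl by (intro mult_left_mono) auto
    also have "\<dots> \<le> c * e * (1/a)" using phi_le_c[OF c, of d] a unfolding e_def by (intro mult_right_mono) auto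
    also have "\<dots> = \<kappa> * e / 2" unfolding c_def using a by simp
    finally show ?thesis .
  qed
  have t2: "phi c d' - phi c d \<le> e * (d' - d) + L / (2*c) * (d' - d)^2"
    using phi_taylor[OF c d d'] unfolding phi_def e_def L_def by simp
  have t3: "(phi c d' - phi c d) / al' \<le> r * e * W + r * (L / (2*c)) * al * W^2"
  proof -
    have "(phi c d' - phi c d) / al' \<le> (e * (d' - d) + L / (2*c) * (d' - d)^2) / al'"
      using t2 al by (intro divide_right_mono) auto
    also have "\<dots> = r * e * W + r * (L / (2*c)) * al * W^2"
      unfolding dW r_def using al by (simp add: field_simps power2_eq_square)
    finally show ?thesis .
  qed
  define x where "x = \<eta> * r * (e * W + (L / (2*c)) * al * W^2)"
  have t4: "\<eta> * phi c d' / al' \<le> \<eta> * phi c d / al + \<eta> * \<kappa> * e / 2 + x"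
  proof -
    have "\<eta> * phi c d' / al' = \<eta> * phi c d / al + \<eta> * ((phi c d' - phi c d) / al') + \<eta> * (phi c d * (1/al' - 1/al))"
      using al by (simp add: field_simps)
    also have "\<dots> \<le> \<eta> * phi c d / al + \<eta> * (r * e * W + r * (L / (2*c)) * al * W^2) + \<eta> * (\<kappa> * e / 2)"
      using t1 t3 eta by (intro add_mono mult_left_mono) auto
    also have "\<dots> = \<eta> * phi c d / al + \<eta> * \<kappa> * e / 2 + x" unfolding x_def by (simp add: algebra_simps)
    finally show ?thesis .
  qed
  have t5: "exp x \<le> 1 + x + x^2/2 * exp \<bar>x\<bar>"
  proof -
    have "exp (max x 0) \<le> exp \<bar>x\<bar>" by simp
    then have "x^2/2 * exp (max x 0) \<le> x^2/2 * exp \<bar>x\<bar>" by (intro mult_left_mono) auto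
    then show ?thesis using exp_quad[of x] by linarith
  qed
  have t6: "\<bar>x\<bar> \<le> \<eta> * G * \<bar>W\<bar>"
  proof -
    have "\<bar>e * W\<bar> \<le> L * \<bar>W\<bar>" using e1 eL by (simp add: abs_mult mult_right_mono)
    moreover have "\<bar>(L / (2*c)) * al * W^2\<bar> \<le> (L / (2*c)) * Fb * \<bar>W\<bar>"
    proof -
      have "\<bar>(L / (2*c)) * al * W^2\<bar> = (L / (2*c)) * (\<bar>d' - d\<bar> * \<bar>W\<bar>)"
        using c L1 al unfolding dW by (simp add: abs_mult power2_eq_square)
      also have "\<dots> \<le> (L / (2*c)) * (Fb * \<bar>W\<bar>)" using absd c L1 by (intro mult_left_mono mult_right_mono) auto
      finally show ?thesis by simp
    qed
    ultimately have "\<bar>e * W + (L / (2*c)) * al * W^2\<bar> \<le> L * \<bar>W\<bar> + (L / (2*c)) * Fb * \<bar>W\<bar>"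
      using abs_triangle_ineq[of "e * W" "(L / (2*c)) * al * W^2"] by linarith
    also have "\<dots> = L * (1 + Fb/(2*c)) * \<bar>W\<bar>" by (simp add: algebra_simps)
    finally have "\<bar>e * W + (L / (2*c)) * al * W^2\<bar> \<le> L * (1 + Fb/(2*c)) * \<bar>W\<bar>" .
    moreover have rr: "r \<ge> 1" unfolding r_def using r by simp
    moreover have "\<bar>x\<bar> = \<eta> * r * \<bar>e * W + (L / (2*c)) * al * W^2\<bar>"
      unfolding x_def using eta rr by (simp add: abs_mult)
    ultimately have "\<bar>x\<bar> \<le> \<eta> * r * (L * (1 + Fb/(2*c)) * \<bar>W\<bar>)"
      using eta by (simp add: mult_left_mono)
    also have "\<dots> \<le> \<eta> * r0 * (L * (1 + Fb/(2*c)) * \<bar>W\<bar>)"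
      using eta r L1 c Fb0 unfolding r_def by (intro mult_right_mono mult_left_mono mult_nonneg_nonneg) auto
    also have "\<dots> = \<eta> * G * \<bar>W\<bar>" unfolding G_def by simp
    finally show ?thesis .
  qed
  have W2: "W^2 \<le> K2 * exp (lam * \<bar>W\<bar> / 4)" unfolding K2_def by (rule sq_le_exp[OF lam])
  have K20: "K2 > 0" unfolding K2_def using lam by simp
  have t7: "x^2/2 * exp \<bar>x\<bar> \<le> \<eta>^2 * G^2 * K2 / 2 * exp (lam * \<bar>W\<bar>)"
  proof -
    have "0 \<le> r0 * L" using r0 L1 by simp
    then have Gp: "0 \<le> G" using G0 by simp
    then have G0': "0 \<le> \<eta> * G" using eta by simp
    have "\<bar>x\<bar> \<le> \<bar>\<eta> * G * \<bar>W\<bar>\<bar>" using t6 Gp eta by (simp add: abs_mult)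
    then have "x^2 \<le> (\<eta> * G * \<bar>W\<bar>)^2" by (simp add: abs_le_square_iff[symmetric])
    moreover have "exp \<bar>x\<bar> \<le> exp (\<eta> * G * \<bar>W\<bar>)" using t6 by simp
    ultimately have "x^2/2 * exp \<bar>x\<bar> \<le> (\<eta> * G * \<bar>W\<bar>)^2 / 2 * exp (\<eta> * G * \<bar>W\<bar>)"
      by (intro mult_mono divide_right_mono) auto
    also have "\<dots> = \<eta>^2 * G^2 / 2 * (W^2 * exp (\<eta> * G * \<bar>W\<bar>))" by (simp add: power_mult_distrib)
    also have "\<dots> \<le> \<eta>^2 * G^2 / 2 * (K2 * exp (lam * \<bar>W\<bar> / 4) * exp (\<eta> * G * \<bar>W\<bar>))"
      using W2 by (intro mult_left_mono mult_right_mono) auto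
    also have "exp (lam * \<bar>W\<bar> / 4) * exp (\<eta> * G * \<bar>W\<bar>) \<le> exp (lam * \<bar>W\<bar>)"
    proof -
      have "\<eta> * G * \<bar>W\<bar> \<le> lam / 2 * \<bar>W\<bar>" using eta by (intro mult_right_mono) auto
      moreover have "0 \<le> lam * \<bar>W\<bar>" using lam by simp
      ultimately have "lam * \<bar>W\<bar> / 4 + \<eta> * G * \<bar>W\<bar> \<le> lam * \<bar>W\<bar>" by linarith
      then show ?thesis by (simp add: exp_add[symmetric])
    qed
    then have "\<eta>^2 * G^2 / 2 * (K2 * exp (lam * \<bar>W\<bar> / 4) * exp (\<eta> * G * \<bar>W\<bar>)) \<le> \<eta>^2 * G^2 / 2 * (K2 * exp (lam * \<bar>W\<bar>))"
      using K20 by (simp add: mult.assoc mult_left_mono)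
    finally show ?thesis by simp
  qed
  have t8: "\<eta> * r * ((L / (2*c)) * al * W^2) \<le> \<eta> * r0 * (L / (2*c)) * al * K2 * exp (lam * \<bar>W\<bar>)"
  proof -
    have "W^2 \<le> K2 * exp (lam * \<bar>W\<bar>)"
    proof -
      have "lam * \<bar>W\<bar> / 4 \<le> lam * \<bar>W\<bar>" using lam by simp
      then have "exp (lam * \<bar>W\<bar> / 4) \<le> exp (lam * \<bar>W\<bar>)" by simp
      then have "K2 * exp (lam * \<bar>W\<bar> / 4) \<le> K2 * exp (lam * \<bar>W\<bar>)" using K20 by simp
      then show ?thesis using W2 by linarith
    qed
    then have "\<eta> * r * ((L / (2*c)) * al * W^2) \<le> \<eta> * r0 * ((L / (2*c)) * al * (K2 * exp (lam * \<bar>W\<bar>)))"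
      using eta r c L1 al \<open>r0 \<ge> 1\<close> unfolding r_def by (intro mult_mono mult_left_mono) auto
    then show ?thesis by (simp add: mult_ac)
  qed
  have t9: "exp x \<le> 1 + \<eta> * r * e * W + Q * exp (lam * \<bar>W\<bar>)"
  proof -
    have "x = \<eta> * r * e * W + \<eta> * r * ((L / (2*c)) * al * W^2)" unfolding x_def by (simp add: algebra_simps)
    then show ?thesis using t5 t7 t8 unfolding Q_def by (simp add: algebra_simps)
  qed
  have "exp (\<eta> * phi c d' / al') \<le> exp (\<eta> * phi c d / al + \<eta> * \<kappa> * e / 2 + x)" using t4 by simp
  also have "\<dots> = exp (\<eta> * phi c d / al) * exp (\<eta> * \<kappa> * e / 2) * exp x" by (simp add: exp_add)
  also have "\<dots> \<le> exp (\<eta> * phi c d / al) * exp (\<eta> * \<kappa> * e / 2) * (1 + \<eta> * r * e * W + Q * exp (lam * \<bar>W\<bar>))"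
    using t9 by (intro mult_left_mono) auto
  finally show ?thesis unfolding r_def e_def by simp
qed

lemma pw_Ac:
  fixes c Fb \<eta> d d' al al' r0 B :: real
  assumes c: "c > 0" and eta: "\<eta> > 0"
    and d: "0 \<le> d" "d \<le> Fb" and d': "0 \<le> d'" "d' \<le> Fb"
    and al: "al > 0" "al' > 0" and r: "al / al' \<le> r0" and dB: "d < al * B"
  shows "exp (\<eta> * phi c d' / al') \<le> exp (\<eta> * r0 * exp (Fb/c) * B) * exp (\<eta> * r0 * exp (Fb/c) * \<bar>(d' - d) / al\<bar>)"
proof -
  define L where "L = exp (Fb/c)"
  define W where "W = (d' - d) / al"
  have L0: "L > 0" unfolding L_def by simp
  have B0: "B > 0" using dB d al by (smt (verit) mult_nonpos_nonneg mult_le_0_iff)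
  have aW: "\<bar>d' - d\<bar> = al * \<bar>W\<bar>" unfolding W_def using al by (simp add: abs_divide)
  have "phi c d' \<le> L * d'" unfolding L_def by (rule phi_le_L[OF c d'])
  also have "\<dots> \<le> L * (al * B + al * \<bar>W\<bar>)" using dB aW L0 by (intro mult_left_mono) auto
  also have "\<dots> = L * al * (B + \<bar>W\<bar>)" by (simp add: algebra_simps)
  finally have "phi c d' / al' \<le> L * al * (B + \<bar>W\<bar>) / al'" using al by (simp add: divide_right_mono)
  also have "\<dots> = L * (al / al') * (B + \<bar>W\<bar>)" by simp
  also have "\<dots> \<le> L * r0 * (B + \<bar>W\<bar>)" using r L0 B0 by (intro mult_right_mono mult_left_mono) auto
  finally have "\<eta> * (phi c d' / al') \<le> \<eta> * (L * r0 * (B + \<bar>W\<bar>))"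
    using eta by (intro mult_left_mono) auto
  then have "\<eta> * phi c d' / al' \<le> \<eta> * r0 * L * B + \<eta> * r0 * L * \<bar>W\<bar>"
    by (simp add: algebra_simps)
  then have "exp (\<eta> * phi c d' / al') \<le> exp (\<eta> * r0 * L * B + \<eta> * r0 * L * \<bar>W\<bar>)" by simp
  then show ?thesis unfolding L_def W_def by (simp add: exp_add)
qed




lemma pw_A':
  fixes a \<kappa> lam Fb \<eta> d d' al al' r0 c L K2 G Q :: real
  assumes defs: "c = a * \<kappa> / 2" "L = exp (Fb / c)" "K2 = 32 / lam^2" "G = r0 * L * (1 + Fb / (2*c))"
     "Q = \<eta> * r0 * (L / (2*c)) * al * K2 + \<eta>^2 * G^2 * K2 / 2"
  assumes a: "a > 0" and k: "\<kappa> > 0" and lam: "lam > 0" and eta: "\<eta> > 0" "\<eta> * G \<le> lam / 2"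
    and d: "0 \<le> d" "d \<le> Fb" and d': "0 \<le> d'" "d' \<le> Fb"
    and al: "al > 0" "al' > 0" and r: "1 \<le> al / al'" "al / al' \<le> r0"
    and dl: "1 / al' - 1 / al \<le> 1 / a"
  shows "exp (\<eta> * phi c d' / al') \<le> exp (\<eta> * phi c d / al) * exp (\<eta> * \<kappa> * exp (d/c) / 2) *
     (1 + \<eta> * (al / al') * exp (d/c) * ((d' - d) / al) + Q * exp (lam * \<bar>(d' - d) / al\<bar>))"
  using pw_A[OF a k lam eta(1) _ d d' al r dl] eta(2) unfolding defs by blast

lemma P3:
  fixes V e h q :: real
  assumes "V \<ge> 0" "e \<ge> 1" "h > 0" "q \<le> h / 2"
  shows "V * exp (h * e / 2) * (1 + q) - 2 * h * (V * exp (h * e / 2)) * e \<le> exp (- h) * V"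
proof -
  define p where "p = h * e"
  have p: "p \<ge> h" unfolding p_def using assms by (simp add: mult_le_cancel_left1)
  have "1 + q - 2 * p \<le> 1 + (- (3/2) * p)" using assms p by simp
  also have "\<dots> \<le> exp (- (3/2) * p)" by (rule exp_ge_add_one_self)
  finally have 1: "1 + q - 2 * p \<le> exp (- (3/2) * p)" .
  have "V * exp (h * e / 2) * (1 + q) - 2 * h * (V * exp (h * e / 2)) * e = V * exp (p / 2) * (1 + q - 2 * p)"
    unfolding p_def by (simp add: algebra_simps)
  also have "\<dots> \<le> V * exp (p / 2) * exp (- (3/2) * p)" using 1 assms by (intro mult_left_mono) auto
  also have "\<dots> = V * exp (- p)" by (simp add: mult.assoc exp_add[symmetric])
  also have "\<dots> \<le> V * exp (- h)" using p assms by (intro mult_left_mono) auto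
  finally show ?thesis by (simp add: mult.commute)
qed

context drift_setting begin

lemma EL_ge1: "1 \<le> (\<integral>\<nu>. exp (lam * Y \<nu>) \<partial>N)"
proof -
  have "(\<integral>\<nu>. 1 \<partial>N) \<le> (\<integral>\<nu>. exp (lam * Y \<nu>) \<partial>N)"
    using EL_int lam Ynn by (intro integral_mono_AE) (auto intro!: AE_I2)
  then show ?thesis by (simp add: N.prob_space)
qed

lemma absW: "\<omega> \<in> space M \<Longrightarrow> \<bar>D (Suc t) \<omega> - D t \<omega>\<bar> \<le> Fb"
  using Dnn[of \<omega> t] Dle[of \<omega> t] Dnn[of \<omega> "Suc t"] Dle[of \<omega> "Suc t"] by linarith

lemma main_step:
  fixes \<eta> :: real
  defines "c \<equiv> a * \<kappa> / 2"
  defines "L \<equiv> exp (Fb / c)"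
  defines "r0 \<equiv> 1 + 1/u"
  defines "K2 \<equiv> 32 / lam^2"
  defines "EL \<equiv> (\<integral>\<nu>. exp (lam * Y \<nu>) \<partial>N)"
  defines "G \<equiv> r0 * L * (1 + Fb / (2*c))"
  assumes eta: "\<eta> > 0" "\<eta> * G \<le> lam / 2" "\<eta> \<le> \<kappa> / (2 * G^2 * K2 * EL)"
    and at: "\<alpha> t \<le> \<kappa> * c / (2 * r0 * L * K2 * EL)"
  shows "(\<integral>\<omega>. exp (\<eta> * phi c (D (Suc t) \<omega>) / \<alpha> (Suc t)) \<partial>M)
     \<le> exp (- (\<eta> * \<kappa>)) * (\<integral>\<omega>. exp (\<eta> * phi c (D t \<omega>) / \<alpha> t) \<partial>M) + exp (\<eta> * r0 * L * B) * EL"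
proof -
  have c: "c > 0" unfolding c_def using a kappa by simp
  have L1: "L \<ge> 1" unfolding L_def using Fb c by simp
  have r0: "r0 \<ge> 1" unfolding r0_def using u by simp
  have K20: "K2 > 0" unfolding K2_def using lam by simp
  have EL1: "EL \<ge> 1" unfolding EL_def by (rule EL_ge1)
  have G0: "G \<ge> r0 * L"
  proof -
    have "r0 * L * 1 \<le> r0 * L * (1 + Fb / (2 * c))" using r0 L1 c Fb by (intro mult_left_mono) auto
    then show ?thesis by (simp add: G_def)
  qed
  have Gp: "G > 0" using G0 r0 L1 by (smt (verit) mult_le_cancel_left1)
  have at0: "\<alpha> t > 0" "\<alpha> (Suc t) > 0" by (rule alpha_pos)+
  note rat = ratio[of t]
  have ineta_lam: "\<eta> * r0 * L \<le> lam"
  proof -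
    have "\<eta> * (r0 * L) \<le> \<eta> * G" using G0 eta by (intro mult_left_mono) auto
    then have "\<eta> * r0 * L \<le> \<eta> * G" by (simp add: mult.assoc)
    then show ?thesis using eta lam by linarith
  qed
  define Q where "Q = \<eta> * r0 * (L / (2*c)) * \<alpha> t * K2 + \<eta>^2 * G^2 * K2 / 2"
  have QEL: "Q * EL \<le> \<eta> * \<kappa> / 2"
  proof -
    have "r0 * L * K2 * EL * \<alpha> t \<le> r0 * L * K2 * EL * (\<kappa> * c / (2 * r0 * L * K2 * EL))"
      using at r0 L1 K20 EL1 by (intro mult_left_mono) auto
    also have "\<dots> = \<kappa> * c / 2" using r0 L1 K20 EL1 by (simp add: field_simps)
    finally have 1: "r0 * L * K2 * EL * \<alpha> t \<le> \<kappa> * c / 2" .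
    have "\<eta> * r0 * (L / (2*c)) * \<alpha> t * K2 * EL = \<eta> / (2*c) * (r0 * L * K2 * EL * \<alpha> t)" by (simp add: field_simps)
    also have "\<dots> \<le> \<eta> / (2*c) * (\<kappa> * c / 2)" using 1 eta c by (intro mult_left_mono) auto
    also have "\<dots> = \<eta> * \<kappa> / 4" using c by (simp add: field_simps)
    finally have A: "\<eta> * r0 * (L / (2*c)) * \<alpha> t * K2 * EL \<le> \<eta> * \<kappa> / 4" .
    have "\<eta> * (G^2 * K2 * EL) \<le> \<kappa> / (2 * G^2 * K2 * EL) * (G^2 * K2 * EL)"
      using eta Gp K20 EL1 by (intro mult_right_mono) auto
    also have "\<dots> = \<kappa> / 2" using Gp K20 EL1 by (simp add: field_simps)
    finally have "\<eta> * (\<eta> * (G^2 * K2 * EL)) \<le> \<eta> * (\<kappa> / 2)" using eta by (intro mult_left_mono) auto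
    then have B: "\<eta>^2 * G^2 * K2 / 2 * EL \<le> \<eta> * \<kappa> / 4" by (simp add: power2_eq_square field_simps)
    have "Q * EL = \<eta> * r0 * (L / (2*c)) * \<alpha> t * K2 * EL + \<eta>^2 * G^2 * K2 / 2 * EL"
      unfolding Q_def by (simp add: distrib_right)
    then show ?thesis using A B by linarith
  qed
  define V where "V \<omega> = exp (\<eta> * phi c (D t \<omega>) / \<alpha> t)" for \<omega>
  define V' where "V' \<omega> = exp (\<eta> * phi c (D (Suc t) \<omega>) / \<alpha> (Suc t))" for \<omega>
  define e where "e \<omega> = exp (D t \<omega> / c)" for \<omega>
  define \<Delta> where "\<Delta> \<omega> = D (Suc t) \<omega> - D t \<omega>" for \<omega>
  define ind where "ind \<omega> = (if \<alpha> t * B \<le> D t \<omega> then 1 else 0::real)" for \<omega>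
  define P where "P \<omega> = ind \<omega> * V \<omega> * exp (\<eta> * \<kappa> * e \<omega> / 2)" for \<omega>
  define r where "r = \<alpha> t / \<alpha> (Suc t)"
  define Xp where "Xp \<omega> = exp (lam * (\<bar>D (Suc t) \<omega> - D t \<omega>\<bar> / \<alpha> t))" for \<omega>
  have Dm[measurable]: "D t \<in> borel_measurable (Fl t)" by (rule Dmeas)
  have Pm[measurable]: "P \<in> borel_measurable (Fl t)" unfolding P_def ind_def V_def e_def phi_def by measurable
  have Pem[measurable]: "(\<lambda>\<omega>. P \<omega> * e \<omega>) \<in> borel_measurable (Fl t)" unfolding P_def ind_def V_def e_def phi_def by measurable
  have PmM[measurable]: "P \<in> borel_measurable M" by (rule measurable_from_subalg[OF sub Pm])
  have [measurable]: "V \<in> borel_measurable M" unfolding V_def phi_def by measurable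
  have [measurable]: "V' \<in> borel_measurable M" unfolding V'_def phi_def by measurable
  have [measurable]: "e \<in> borel_measurable M" unfolding e_def by measurable
  have [measurable]: "\<Delta> \<in> borel_measurable M" unfolding \<Delta>_def by measurable
  have [measurable]: "ind \<in> borel_measurable M" unfolding ind_def by measurable
  have [measurable]: "Xp \<in> borel_measurable M" unfolding Xp_def by measurable
  define Vb where "Vb = exp (\<eta> * (L * Fb) / \<alpha> t)"
  define Pb where "Pb = Vb * exp (\<eta> * \<kappa> * L / 2)"
  define Xpb where "Xpb = exp (lam * (Fb / \<alpha> t))"
  have bnd: "0 \<le> V \<omega> \<and> V \<omega> \<le> Vb \<and> 0 \<le> V' \<omega> \<and> V' \<omega> \<le> exp (\<eta> * (L * Fb) / \<alpha> (Suc t)) \<and>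
      1 \<le> e \<omega> \<and> e \<omega> \<le> L \<and> 0 \<le> P \<omega> \<and> P \<omega> \<le> Pb \<and> \<bar>\<Delta> \<omega>\<bar> \<le> Fb \<and> 0 \<le> ind \<omega> \<and> ind \<omega> \<le> 1
      \<and> 0 \<le> Xp \<omega> \<and> Xp \<omega> \<le> Xpb" if w: "\<omega> \<in> space M" for \<omega>
  proof -
    have d: "0 \<le> D t \<omega>" "D t \<omega> \<le> Fb" "0 \<le> D (Suc t) \<omega>" "D (Suc t) \<omega> \<le> Fb" using Dnn[OF w] Dle[OF w] by auto
    have ph: "phi c (D t \<omega>) \<le> L * Fb" "phi c (D (Suc t) \<omega>) \<le> L * Fb"
      using phi_le_L[OF c d(1,2)] phi_le_L[OF c d(3,4)] d L1 unfolding L_def[symmetric]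
      by (auto intro: order_trans mult_left_mono)
    have V: "V \<omega> \<le> Vb" unfolding V_def Vb_def using ph eta at0 by (auto intro!: divide_right_mono mult_left_mono)
    have V': "V' \<omega> \<le> exp (\<eta> * (L * Fb) / \<alpha> (Suc t))" unfolding V'_def using ph eta at0 by (auto intro!: divide_right_mono mult_left_mono)
    have e: "1 \<le> e \<omega>" "e \<omega> \<le> L" unfolding e_def L_def using d c by (auto intro!: divide_right_mono)
    have "exp (\<eta> * \<kappa> * e \<omega> / 2) \<le> exp (\<eta> * \<kappa> * L / 2)" using e eta kappa by (auto intro!: divide_right_mono mult_left_mono)
    moreover have "Vb > 0" unfolding Vb_def by simp
    ultimately have P: "P \<omega> \<le> Pb" "0 \<le> P \<omega>" unfolding P_def Pb_def ind_def using V by (auto simp: V_def intro!: mult_mono)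
    have Dl: "\<bar>\<Delta> \<omega>\<bar> \<le> Fb" unfolding \<Delta>_def using absW[OF w] .
    have "lam * (\<bar>D (Suc t) \<omega> - D t \<omega>\<bar> / \<alpha> t) \<le> lam * (Fb / \<alpha> t)"
      using absW[OF w] lam at0 by (intro mult_left_mono divide_right_mono) auto
    then have "Xp \<omega> \<le> Xpb" unfolding Xp_def Xpb_def by simp
    then show ?thesis using V V' e P Dl by (auto simp: V_def V'_def ind_def Xp_def)
  qed
  note bint = bounded_integrable[OF M]
  have rr: "1 \<le> r" "r \<le> r0" unfolding r_def r0_def using rat by auto
  have Q0: "Q \<ge> 0" unfolding Q_def using eta r0 L1 c K20 at0 by (intro add_nonneg_nonneg mult_nonneg_nonneg) auto
  have P1: "V' \<omega> * ind \<omega> \<le> P \<omega> + (\<eta> * r / \<alpha> t) * (P \<omega> * e \<omega> * \<Delta> \<omega>) + Q * (P \<omega> * Xp \<omega>)"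
    if w: "\<omega> \<in> space M" for \<omega>
  proof (cases "\<alpha> t * B \<le> D t \<omega>")
    case True
    have d: "0 \<le> D t \<omega>" "D t \<omega> \<le> Fb" "0 \<le> D (Suc t) \<omega>" "D (Suc t) \<omega> \<le> Fb" using Dnn[OF w] Dle[OF w] by auto
    have "V' \<omega> \<le> V \<omega> * exp (\<eta> * \<kappa> * e \<omega> / 2) * (1 + \<eta> * r * e \<omega> * (\<Delta> \<omega> / \<alpha> t) + Q * Xp \<omega>)"
      using pw_A'[OF c_def[THEN meta_eq_to_obj_eq] L_def[THEN meta_eq_to_obj_eq] K2_def[THEN meta_eq_to_obj_eq] G_def[THEN meta_eq_to_obj_eq] Q_def a kappa lam eta(1,2) d at0 rat(1) _ rat(3)]
        rat(2) unfolding r0_def[symmetric]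
      by (simp add: V_def V'_def e_def \<Delta>_def Xp_def r_def abs_divide at0(1) less_imp_le)
    also have "\<dots> = P \<omega> + (\<eta> * r / \<alpha> t) * (P \<omega> * e \<omega> * \<Delta> \<omega>) + Q * (P \<omega> * Xp \<omega>)"
      unfolding P_def ind_def using True by (simp add: algebra_simps)
    finally show ?thesis unfolding ind_def using True by simp
  next
    case False
    then show ?thesis unfolding P_def ind_def by simp
  qed
  have P2: "V' \<omega> * (1 - ind \<omega>) \<le> exp (\<eta> * r0 * L * B) * ((1 - ind \<omega>) * Xp \<omega>)"
    if w: "\<omega> \<in> space M" for \<omega>
  proof (cases "\<alpha> t * B \<le> D t \<omega>")
    case True
    then show ?thesis unfolding ind_def by simp
  next
    case False
    have d: "0 \<le> D t \<omega>" "D t \<omega> \<le> Fb" "0 \<le> D (Suc t) \<omega>" "D (Suc t) \<omega> \<le> Fb" using Dnn[OF w] Dle[OF w] by auto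
    have rt: "\<alpha> t / \<alpha> (Suc t) \<le> r0" using rat(2) unfolding r0_def .
    have 1: "V' \<omega> \<le> exp (\<eta> * r0 * L * B) * exp (\<eta> * r0 * L * \<bar>(D (Suc t) \<omega> - D t \<omega>) / \<alpha> t\<bar>)"
      using pw_Ac[OF c eta(1) d at0 rt] False unfolding V'_def L_def by simp
    have "\<eta> * r0 * L * \<bar>(D (Suc t) \<omega> - D t \<omega>) / \<alpha> t\<bar> \<le> lam * (\<bar>D (Suc t) \<omega> - D t \<omega>\<bar> / \<alpha> t)"
    proof -
      have "\<eta> * r0 * L * (\<bar>D (Suc t) \<omega> - D t \<omega>\<bar> / \<alpha> t) \<le> lam * (\<bar>D (Suc t) \<omega> - D t \<omega>\<bar> / \<alpha> t)"
        using ineta_lam at0 by (intro mult_right_mono) auto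
      then show ?thesis using at0 by (simp add: abs_divide)
    qed
    then have "exp (\<eta> * r0 * L * \<bar>(D (Suc t) \<omega> - D t \<omega>) / \<alpha> t\<bar>) \<le> Xp \<omega>" unfolding Xp_def by simp
    then have "V' \<omega> \<le> exp (\<eta> * r0 * L * B) * Xp \<omega>" using 1 by (smt (verit) exp_gt_zero mult_left_mono)
    then show ?thesis unfolding ind_def using False by simp
  qed
  have iV: "integrable M V" by (rule bint[where K=Vb]) (use bnd in auto)
  have iV': "integrable M V'" by (rule bint[where K="exp (\<eta> * (L * Fb) / \<alpha> (Suc t))"]) (use bnd in auto)
  have iP: "integrable M P" by (rule bint[where K=Pb]) (use bnd in auto)
  have iPe: "integrable M (\<lambda>\<omega>. P \<omega> * e \<omega>)"
  proof (rule bint[where K="Pb * L"])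
    fix \<omega> assume w: "\<omega> \<in> space M" then show "\<bar>P \<omega> * e \<omega>\<bar> \<le> Pb * L" using bnd[OF w] by (simp add: abs_mult mult_mono)
  qed measurable
  have iPeD: "integrable M (\<lambda>\<omega>. P \<omega> * e \<omega> * \<Delta> \<omega>)"
  proof (rule bint[where K="Pb * L * Fb"])
    fix \<omega> assume w: "\<omega> \<in> space M" then show "\<bar>P \<omega> * e \<omega> * \<Delta> \<omega>\<bar> \<le> Pb * L * Fb"
      using bnd[OF w] by (simp add: abs_mult mult_mono)
  qed measurable
  have iPX: "integrable M (\<lambda>\<omega>. P \<omega> * Xp \<omega>)"
  proof (rule bint[where K="Pb * Xpb"])
    fix \<omega> assume w: "\<omega> \<in> space M" then show "\<bar>P \<omega> * Xp \<omega>\<bar> \<le> Pb * Xpb" using bnd[OF w] by (simp add: abs_mult mult_mono)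
  qed measurable
  have iNX: "integrable M (\<lambda>\<omega>. (1 - ind \<omega>) * Xp \<omega>)"
  proof (rule bint[where K="Xpb"])
    fix \<omega> assume w: "\<omega> \<in> space M" then show "\<bar>(1 - ind \<omega>) * Xp \<omega>\<bar> \<le> Xpb" using bnd[OF w] by (simp add: abs_mult ind_def)
  qed measurable
  have iN: "integrable M (\<lambda>\<omega>. 1 - ind \<omega>)" by (rule bint[where K=1]) (use bnd in \<open>auto simp: ind_def\<close>)
  have iVi: "integrable M (\<lambda>\<omega>. V' \<omega> * ind \<omega>)"
    by (rule bint[where K="exp (\<eta> * (L * Fb) / \<alpha> (Suc t))"]) (use bnd in \<open>auto simp: ind_def\<close>)
  have iVn: "integrable M (\<lambda>\<omega>. V' \<omega> * (1 - ind \<omega>))"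
    by (rule bint[where K="exp (\<eta> * (L * Fb) / \<alpha> (Suc t))"]) (use bnd in \<open>auto simp: ind_def\<close>)
  have intPos: "0 \<le> (\<integral>\<omega>. P \<omega> * e \<omega> \<partial>M)" "0 \<le> (\<integral>\<omega>. P \<omega> \<partial>M)"
  proof -
    have "0 \<le> P \<omega> * e \<omega>" "0 \<le> P \<omega>" if "\<omega> \<in> space M" for \<omega> using bnd[OF that] by auto
    then show "0 \<le> (\<integral>\<omega>. P \<omega> * e \<omega> \<partial>M)" "0 \<le> (\<integral>\<omega>. P \<omega> \<partial>M)"
      by (auto intro!: integral_nonneg_AE AE_I2)
  qed
  have Pe_meas: "(\<lambda>\<omega>. P \<omega> * e \<omega>) \<in> borel_measurable (Fl t)" by (rule Pem)
  have drift: "(\<integral>\<omega>. P \<omega> * e \<omega> * \<Delta> \<omega> \<partial>M) \<le> - 2 * \<alpha> t * \<kappa> * (\<integral>\<omega>. P \<omega> * e \<omega> \<partial>M)"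
  proof -
    have "(\<integral>\<omega>. P \<omega> * e \<omega> * (D (Suc t) \<omega> - D t \<omega>) \<partial>M) \<le> - 2 * \<alpha> t * \<kappa> * (\<integral>\<omega>. P \<omega> * e \<omega> \<partial>M)"
    proof (rule drift_weighted[OF Pe_meas, where Zmax="Pb * L"])
      fix \<omega> assume w: "\<omega> \<in> space M"
      show "0 \<le> P \<omega> * e \<omega>" "P \<omega> * e \<omega> \<le> Pb * L" using bnd[OF w] by (auto intro: mult_mono)
      show "D t \<omega> < \<alpha> t * B \<Longrightarrow> P \<omega> * e \<omega> = 0" unfolding P_def ind_def by simp
    qed
    then show ?thesis unfolding \<Delta>_def .
  qed
  have kl1: "(\<integral>\<omega>. P \<omega> * Xp \<omega> \<partial>M) \<le> (\<integral>\<omega>. P \<omega> \<partial>M) * EL"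
    unfolding Xp_def EL_def by (rule KL[OF Pm, where Zmax=Pb]) (use bnd in auto)
  have Nm: "(\<lambda>\<omega>. 1 - ind \<omega>) \<in> borel_measurable (Fl t)" unfolding ind_def by measurable
  have kl2: "(\<integral>\<omega>. (1 - ind \<omega>) * Xp \<omega> \<partial>M) \<le> (\<integral>\<omega>. 1 - ind \<omega> \<partial>M) * EL"
    unfolding Xp_def EL_def by (rule KL[OF Nm, where Zmax=1]) (use bnd in \<open>auto simp: ind_def\<close>)
  have N1: "(\<integral>\<omega>. 1 - ind \<omega> \<partial>M) \<le> 1"
  proof -
    have "(\<integral>\<omega>. 1 - ind \<omega> \<partial>M) \<le> (\<integral>\<omega>. 1 \<partial>M)" using iN bnd by (intro integral_mono) auto
    then show ?thesis by (simp add: M.prob_space)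
  qed
  have S1: "(\<integral>\<omega>. V' \<omega> * ind \<omega> \<partial>M) \<le> exp (- (\<eta> * \<kappa>)) * (\<integral>\<omega>. V \<omega> \<partial>M)"
  proof -
    have "(\<integral>\<omega>. V' \<omega> * ind \<omega> \<partial>M) \<le> (\<integral>\<omega>. P \<omega> + (\<eta> * r / \<alpha> t) * (P \<omega> * e \<omega> * \<Delta> \<omega>) + Q * (P \<omega> * Xp \<omega>) \<partial>M)"
      using iVi iP iPeD iPX P1 by (intro integral_mono) auto
    also have "\<dots> = (\<integral>\<omega>. P \<omega> \<partial>M) + (\<eta> * r / \<alpha> t) * (\<integral>\<omega>. P \<omega> * e \<omega> * \<Delta> \<omega> \<partial>M) + Q * (\<integral>\<omega>. P \<omega> * Xp \<omega> \<partial>M)"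
      using iP iPeD iPX by simp
    also have "\<dots> \<le> (\<integral>\<omega>. P \<omega> \<partial>M) + (\<eta> * r / \<alpha> t) * (- 2 * \<alpha> t * \<kappa> * (\<integral>\<omega>. P \<omega> * e \<omega> \<partial>M)) + Q * ((\<integral>\<omega>. P \<omega> \<partial>M) * EL)"
      using drift kl1 Q0 eta rr at0 by (intro add_mono mult_left_mono) auto
    also have "\<dots> = (\<integral>\<omega>. P \<omega> \<partial>M) * (1 + Q * EL) - 2 * \<eta> * \<kappa> * r * (\<integral>\<omega>. P \<omega> * e \<omega> \<partial>M)"
      using at0 by (simp add: field_simps)
    also have "\<dots> \<le> (\<integral>\<omega>. P \<omega> \<partial>M) * (1 + Q * EL) - 2 * \<eta> * \<kappa> * (\<integral>\<omega>. P \<omega> * e \<omega> \<partial>M)"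
    proof -
      have "2 * \<eta> * \<kappa> * (\<integral>\<omega>. P \<omega> * e \<omega> \<partial>M) * 1 \<le> 2 * \<eta> * \<kappa> * (\<integral>\<omega>. P \<omega> * e \<omega> \<partial>M) * r"
        using rr intPos eta kappa by (intro mult_left_mono) auto
      then show ?thesis by (simp add: mult_ac)
    qed
    also have "\<dots> = (\<integral>\<omega>. P \<omega> * (1 + Q * EL) - 2 * \<eta> * \<kappa> * (P \<omega> * e \<omega>) \<partial>M)"
      using iP iPe by simp
    also have "\<dots> \<le> (\<integral>\<omega>. exp (- (\<eta> * \<kappa>)) * V \<omega> \<partial>M)"
    proof (rule integral_mono)
      show "integrable M (\<lambda>\<omega>. P \<omega> * (1 + Q * EL) - 2 * \<eta> * \<kappa> * (P \<omega> * e \<omega>))" using iP iPe by simp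
      show "integrable M (\<lambda>\<omega>. exp (- (\<eta> * \<kappa>)) * V \<omega>)" using iV by simp
      fix \<omega> assume w: "\<omega> \<in> space M"
      show "P \<omega> * (1 + Q * EL) - 2 * \<eta> * \<kappa> * (P \<omega> * e \<omega>) \<le> exp (- (\<eta> * \<kappa>)) * V \<omega>"
      proof (cases "\<alpha> t * B \<le> D t \<omega>")
        case True
        have "V \<omega> * exp (\<eta> * \<kappa> * e \<omega> / 2) * (1 + Q * EL) - 2 * (\<eta> * \<kappa>) * (V \<omega> * exp (\<eta> * \<kappa> * e \<omega> / 2)) * e \<omega> \<le> exp (- (\<eta> * \<kappa>)) * V \<omega>"
          using P3[of "V \<omega>" "e \<omega>" "\<eta> * \<kappa>" "Q * EL"] bnd[OF w] eta kappa QEL by simp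
        then show ?thesis unfolding P_def ind_def using True by (simp add: mult_ac)
      next
        case False
        then show ?thesis unfolding P_def ind_def using bnd[OF w] by simp
      qed
    qed
    also have "\<dots> = exp (- (\<eta> * \<kappa>)) * (\<integral>\<omega>. V \<omega> \<partial>M)" by simp
    finally show ?thesis .
  qed
  have S2: "(\<integral>\<omega>. V' \<omega> * (1 - ind \<omega>) \<partial>M) \<le> exp (\<eta> * r0 * L * B) * EL"
  proof -
    have "(\<integral>\<omega>. V' \<omega> * (1 - ind \<omega>) \<partial>M) \<le> (\<integral>\<omega>. exp (\<eta> * r0 * L * B) * ((1 - ind \<omega>) * Xp \<omega>) \<partial>M)"
      using iVn iNX P2 by (intro integral_mono) auto
    also have "\<dots> = exp (\<eta> * r0 * L * B) * (\<integral>\<omega>. (1 - ind \<omega>) * Xp \<omega> \<partial>M)" by simp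
    also have "\<dots> \<le> exp (\<eta> * r0 * L * B) * ((\<integral>\<omega>. 1 - ind \<omega> \<partial>M) * EL)"
      using kl2 by (intro mult_left_mono) auto
    also have "\<dots> \<le> exp (\<eta> * r0 * L * B) * (1 * EL)"
      using N1 EL1 by (intro mult_left_mono mult_right_mono) auto
    finally show ?thesis by simp
  qed
  have "(\<integral>\<omega>. V' \<omega> \<partial>M) = (\<integral>\<omega>. V' \<omega> * ind \<omega> + V' \<omega> * (1 - ind \<omega>) \<partial>M)"
    by (simp add: algebra_simps)
  also have "\<dots> = (\<integral>\<omega>. V' \<omega> * ind \<omega> \<partial>M) + (\<integral>\<omega>. V' \<omega> * (1 - ind \<omega>) \<partial>M)"
    using iVi iVn by simp
  finally have "(\<integral>\<omega>. V' \<omega> \<partial>M) \<le> exp (- (\<eta> * \<kappa>)) * (\<integral>\<omega>. V \<omega> \<partial>M) + exp (\<eta> * r0 * L * B) * EL"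
    using S1 S2 by simp
  then show ?thesis unfolding V_def V'_def .
qed

lemma final:
  "\<exists>I J K. I > 0 \<and> J > 0 \<and> K > 0 \<and>
    (\<forall>t. \<forall>z\<ge>0. measure M {\<omega> \<in> space M. z \<le> D (Suc t) \<omega>} \<le> I * exp (- (J / \<alpha> t) * z)
       \<and> (\<integral>\<omega>. D (Suc t) \<omega> \<partial>M) \<le> K * \<alpha> t)"
proof -
  define c where "c = a * \<kappa> / 2"
  define L where "L = exp (Fb / c)"
  define r0 where "r0 = 1 + 1/u"
  define K2 where "K2 = 32 / lam^2"
  define EL where "EL = (\<integral>\<nu>. exp (lam * Y \<nu>) \<partial>N)"
  define G where "G = r0 * L * (1 + Fb / (2*c))"
  have c: "c > 0" unfolding c_def using a kappa by simp
  have L1: "L \<ge> 1" unfolding L_def using Fb c by simp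
  have r0: "r0 \<ge> 1" unfolding r0_def using u by simp
  have K20: "K2 > 0" unfolding K2_def using lam by simp
  have EL1: "EL \<ge> 1" unfolding EL_def by (rule EL_ge1)
  have Gp: "G > 0" unfolding G_def using r0 L1 c Fb by (intro mult_pos_pos add_pos_nonneg) auto
  define \<eta> where "\<eta> = min (lam / (2 * G)) (\<kappa> / (2 * G^2 * K2 * EL))"
  have eta: "\<eta> > 0" "\<eta> * G \<le> lam / 2" "\<eta> \<le> \<kappa> / (2 * G^2 * K2 * EL)"
  proof -
    show "\<eta> > 0" unfolding \<eta>_def using lam Gp kappa K20 EL1 by simp
    have "\<eta> \<le> lam / (2 * G)" unfolding \<eta>_def by simp
    then have "\<eta> * G \<le> lam / (2 * G) * G" using Gp by (intro mult_right_mono) auto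
    then show "\<eta> * G \<le> lam / 2" using Gp by simp
    show "\<eta> \<le> \<kappa> / (2 * G^2 * K2 * EL)" unfolding \<eta>_def by simp
  qed
  define \<alpha>s where "\<alpha>s = \<kappa> * c / (2 * r0 * L * K2 * EL)"
  have as0: "\<alpha>s > 0" unfolding \<alpha>s_def using kappa c r0 L1 K20 EL1 by simp
  define \<rho> where "\<rho> = exp (- (\<eta> * \<kappa>))"
  have rho: "\<rho> < 1" "0 < \<rho>" unfolding \<rho>_def using eta kappa by auto
  define C' where "C' = exp (\<eta> * r0 * L * B) * EL"
  define Mb where "Mb = max (max (exp (\<eta> * (L * Fb) / \<alpha> 0)) (exp (\<eta> * (L * Fb) * r0 / \<alpha>s))) (C' / (1 - \<rho>))"
  have Mb_pos: "Mb > 0" unfolding Mb_def by (simp add: max.strict_coboundedI1)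
  define V where "V t \<omega> = exp (\<eta> * phi c (D t \<omega>) / \<alpha> t)" for t \<omega>
  have Vm[measurable]: "V t \<in> borel_measurable M" for t unfolding V_def phi_def by measurable
  have Vbound: "0 \<le> V t \<omega> \<and> V t \<omega> \<le> exp (\<eta> * (L * Fb) / \<alpha> t)" if w: "\<omega> \<in> space M" for t \<omega>
  proof -
    have "phi c (D t \<omega>) \<le> L * D t \<omega>" unfolding L_def using phi_le_L[OF c Dnn[OF w] Dle[OF w]] .
    also have "\<dots> \<le> L * Fb" using Dle[OF w] L1 by (intro mult_left_mono) auto
    finally have "\<eta> * phi c (D t \<omega>) / \<alpha> t \<le> \<eta> * (L * Fb) / \<alpha> t"
      using eta alpha_pos[of t] by (intro divide_right_mono mult_left_mono) auto
    then show ?thesis unfolding V_def by simp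
  qed
  have iV: "integrable M (V t)" for t
    by (rule bounded_integrable[OF M Vm, where K="exp (\<eta> * (L * Fb) / \<alpha> t)"]) (use Vbound in auto)
  have intconst: "(\<integral>\<omega>. V t \<omega> \<partial>M) \<le> K" if "K \<ge> exp (\<eta> * (L * Fb) / \<alpha> t)" for t K
  proof -
    have "(\<integral>\<omega>. V t \<omega> \<partial>M) \<le> (\<integral>\<omega>. K \<partial>M)"
      using iV Vbound that by (intro integral_mono) (auto intro: order_trans)
    then show ?thesis by (simp add: M.prob_space)
  qed
  have bound: "(\<integral>\<omega>. V t \<omega> \<partial>M) \<le> Mb" for t
  proof (induction t)
    case 0
    show ?case by (rule intconst) (simp add: Mb_def)
  next
    case (Suc t)
    show ?case
    proof (cases "\<alpha> t \<le> \<alpha>s")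
      case True
      have ms: "(\<integral>\<omega>. V (Suc t) \<omega> \<partial>M) \<le> \<rho> * (\<integral>\<omega>. V t \<omega> \<partial>M) + C'"
        using main_step[of \<eta> t] eta True
        unfolding V_def \<rho>_def C'_def c_def[symmetric] L_def[symmetric] r0_def[symmetric] K2_def[symmetric] EL_def[symmetric]
          G_def[symmetric] \<alpha>s_def by simp
      have "\<rho> * (\<integral>\<omega>. V t \<omega> \<partial>M) + C' \<le> \<rho> * Mb + C'" using Suc rho by (intro add_right_mono mult_left_mono) auto
      also have "\<dots> \<le> Mb"
      proof -
        have "C' / (1 - \<rho>) \<le> Mb" unfolding Mb_def by simp
        then have "C' \<le> Mb * (1 - \<rho>)" using rho by (simp add: divide_le_eq)
        then show ?thesis by (simp add: algebra_simps)
      qed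
      finally show ?thesis using ms by simp
    next
      case False
      have "\<alpha> t / \<alpha> (Suc t) \<le> r0" using ratio(2)[of t] unfolding r0_def .
      then have "\<alpha> t \<le> r0 * \<alpha> (Suc t)" using alpha_pos[of "Suc t"] by (simp add: divide_le_eq)
      then have "\<alpha>s \<le> r0 * \<alpha> (Suc t)" using False by simp
      then have "1 / \<alpha> (Suc t) \<le> r0 / \<alpha>s" using as0 alpha_pos[of "Suc t"] by (simp add: field_simps)
      then have "\<eta> * (L * Fb) * (1 / \<alpha> (Suc t)) \<le> \<eta> * (L * Fb) * (r0 / \<alpha>s)"
        using eta L1 Fb by (intro mult_left_mono) auto
      then have "exp (\<eta> * (L * Fb) / \<alpha> (Suc t)) \<le> exp (\<eta> * (L * Fb) * r0 / \<alpha>s)" by simp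
      also have "\<dots> \<le> Mb" unfolding Mb_def by simp
      finally show ?thesis by (rule intconst)
    qed
  qed
  have main: "measure M {\<omega> \<in> space M. z \<le> D (Suc t) \<omega>} \<le> Mb * exp (- (\<eta> / \<alpha> t) * z)
       \<and> (\<integral>\<omega>. D (Suc t) \<omega> \<partial>M) \<le> (Mb / \<eta>) * \<alpha> t" if z: "z \<ge> 0" for t z
  proof
    have at: "\<alpha> (Suc t) \<le> \<alpha> t" using ratio(1)[of t] alpha_pos[of "Suc t"] by (simp add: le_divide_eq)
    have key: "\<eta> * D (Suc t) \<omega> / \<alpha> t \<le> \<eta> * phi c (D (Suc t) \<omega>) / \<alpha> (Suc t)" if w: "\<omega> \<in> space M" for \<omega>
    proof -
      have "\<eta> * D (Suc t) \<omega> / \<alpha> t \<le> \<eta> * D (Suc t) \<omega> / \<alpha> (Suc t)"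
        using eta Dnn[OF w] alpha_pos at by (intro divide_left_mono mult_nonneg_nonneg mult_pos_pos) auto
      also have "\<dots> \<le> \<eta> * phi c (D (Suc t) \<omega>) / \<alpha> (Suc t)"
        using eta phi_ge[OF c] alpha_pos[of "Suc t"] by (intro divide_right_mono mult_left_mono) auto
      finally show ?thesis .
    qed
    have "{\<omega> \<in> space M. z \<le> D (Suc t) \<omega>} \<subseteq> {\<omega> \<in> space M. exp (\<eta> * z / \<alpha> t) \<le> V (Suc t) \<omega>}"
    proof safe
      fix \<omega> assume w: "\<omega> \<in> space M" and zd: "z \<le> D (Suc t) \<omega>"
      have "\<eta> * z / \<alpha> t \<le> \<eta> * D (Suc t) \<omega> / \<alpha> t" using zd eta alpha_pos[of t]
        by (intro divide_right_mono mult_left_mono) auto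
      then show "exp (\<eta> * z / \<alpha> t) \<le> V (Suc t) \<omega>" unfolding V_def using key[OF w] by simp
    qed
    then have "measure M {\<omega> \<in> space M. z \<le> D (Suc t) \<omega>} \<le> measure M {\<omega> \<in> space M. exp (\<eta> * z / \<alpha> t) \<le> V (Suc t) \<omega>}"
      by (intro M.finite_measure_mono) measurable
    also have "\<dots> \<le> (\<integral>\<omega>. V (Suc t) \<omega> \<partial>M) / exp (\<eta> * z / \<alpha> t)"
      by (rule integral_Markov_inequality_measure[OF iV, where A="space M"]) (use Vbound in auto)
    also have "\<dots> \<le> Mb / exp (\<eta> * z / \<alpha> t)" using bound by (intro divide_right_mono) auto
    also have "\<dots> = Mb * exp (- (\<eta> / \<alpha> t) * z)" by (simp add: exp_minus field_simps)
    finally show "measure M {\<omega> \<in> space M. z \<le> D (Suc t) \<omega>} \<le> Mb * exp (- (\<eta> / \<alpha> t) * z)" .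
    have "(\<integral>\<omega>. D (Suc t) \<omega> \<partial>M) \<le> (\<integral>\<omega>. (\<alpha> t / \<eta>) * V (Suc t) \<omega> \<partial>M)"
    proof (rule integral_mono)
      show "integrable M (D (Suc t))"
        by (rule bounded_integrable[OF M DmeasM, where K=Fb]) (use Dnn Dle in \<open>auto simp: abs_le_iff intro: order_trans[of _ 0]\<close>)
      show "integrable M (\<lambda>\<omega>. \<alpha> t / \<eta> * V (Suc t) \<omega>)" using iV by simp
      fix \<omega> assume w: "\<omega> \<in> space M"
      have "\<eta> * D (Suc t) \<omega> / \<alpha> t \<le> V (Suc t) \<omega>" unfolding V_def
        using key[OF w] exp_ge_add_one_self[of "\<eta> * phi c (D (Suc t) \<omega>) / \<alpha> (Suc t)"] by linarith
      then show "D (Suc t) \<omega> \<le> \<alpha> t / \<eta> * V (Suc t) \<omega>" using eta alpha_pos[of t] by (simp add: field_simps)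
    qed
    also have "\<dots> = (\<alpha> t / \<eta>) * (\<integral>\<omega>. V (Suc t) \<omega> \<partial>M)" by simp
    also have "\<dots> \<le> (\<alpha> t / \<eta>) * Mb" using bound eta alpha_pos[of t] by (intro mult_left_mono) auto
    finally show "(\<integral>\<omega>. D (Suc t) \<omega> \<partial>M) \<le> (Mb / \<eta>) * \<alpha> t" by (simp add: mult.commute)
  qed
  show ?thesis
    by (rule exI[of _ Mb], rule exI[of _ \<eta>], rule exI[of _ "Mb / \<eta>"]) (use Mb_pos eta main in auto)
qed

end


theorem theorem1:
  fixes M :: "'w measure" and Fl :: "nat \<Rightarrow> 'w measure"
    and X :: "'e::euclidean_space set" and f :: "'e \<Rightarrow> real" and xstar :: 'e
    and x :: "nat \<Rightarrow> 'w \<Rightarrow> 'e" and \<alpha> :: "nat \<Rightarrow> real"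
    and a u \<gamma> \<kappa> B lam :: real
    and N :: "'v measure" and Y :: "'v \<Rightarrow> real"
  assumes M: "prob_space M"
    and X: "X \<noteq> {}" "closed X" "bounded X" "convex X"
    and f_cont: "continuous_on X f"
    and xstar: "xstar \<in> X" "\<forall>y\<in>X. f xstar \<le> f y"
    and filt_sub: "\<forall>t. subalgebra M (Fl t)"
    and filt_mono: "\<forall>s t. s \<le> t \<longrightarrow> sets (Fl s) \<subseteq> sets (Fl t)"
    and adapted: "\<forall>t. x t \<in> borel_measurable (Fl t)"
    and in_X: "\<forall>t. \<forall>\<omega>\<in>space M. x t \<omega> \<in> X"
    and step: "a > 0" "u > 0" "0 \<le> \<gamma>" "\<gamma> \<le> 1"
      "\<forall>t. \<alpha> t = a / (u + real t) powr \<gamma>"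
    and C1: "\<kappa> > 0" "B > 0"
      "\<forall>t. AE \<omega> in M. f (x t \<omega>) - f xstar \<ge> \<alpha> t * B \<longrightarrow>
          real_cond_exp M (Fl t) (\<lambda>\<omega>. f (x (Suc t) \<omega>) - f (x t \<omega>)) \<omega> \<le> - 2 * \<alpha> t * \<kappa>"
    and C2: "lam > 0" "prob_space N" "Y \<in> borel_measurable N"
      "\<forall>\<omega>\<in>space N. Y \<omega> \<ge> 0"
      "(\<integral>\<^sup>+ \<omega>. ennreal (exp (lam * Y \<omega>)) \<partial>N) < \<infinity>"
      "\<forall>t. \<forall>y\<ge>0. AE \<omega> in M.
          real_cond_exp M (Fl t)
            (indicator {\<omega>' \<in> space M. \<bar>f (x (Suc t) \<omega>') - f (x t \<omega>')\<bar> \<ge> \<alpha> t * y}) \<omega>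
          \<le> measure N {\<omega>' \<in> space N. Y \<omega>' \<ge> y}"
  shows "\<exists>I J K. I > 0 \<and> J > 0 \<and> K > 0 \<and>
    (\<forall>t. \<forall>z\<ge>0.
       measure M {\<omega> \<in> space M. f (x (Suc t) \<omega>) - f xstar \<ge> z} \<le> I * exp (- (J / \<alpha> t) * z)
     \<and> (\<integral>\<omega>. (f (x (Suc t) \<omega>) - f xstar) \<partial>M) \<le> K * \<alpha> t)"
proof -
  define D where "D t \<omega> = f (x t \<omega>) - f xstar" for t \<omega>
  have compX: "compact X" using X by (simp add: compact_eq_bounded_closed)
  have "compact (f ` X)" by (rule compact_continuous_image[OF f_cont compX])
  then obtain Bf where Bf: "\<forall>y\<in>f ` X. \<bar>y\<bar> \<le> Bf" using compact_imp_bounded bounded_real by blast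
  define Fb where "Fb = 2 * Bf + 1"
  have spF: "space (Fl t) = space M" for t using filt_sub unfolding subalgebra_def by auto
  have Dm: "D t \<in> borel_measurable (Fl t)" for t
  proof -
    have Xb: "X \<in> sets borel" using X by simp
    have g: "(\<lambda>y. indicator X y *\<^sub>R f y) \<in> borel_measurable borel"
      by (rule borel_measurable_continuous_on_indicator[OF Xb f_cont])
    have "(\<lambda>\<omega>. indicator X (x t \<omega>) *\<^sub>R f (x t \<omega>)) \<in> borel_measurable (Fl t)"
      using measurable_compose[OF adapted[rule_format, of t] g] by simp
    then have "(\<lambda>\<omega>. f (x t \<omega>)) \<in> borel_measurable (Fl t)"
      by (rule measurable_cong[THEN iffD1, rotated]) (use in_X spF in auto)
    then show ?thesis unfolding D_def by measurable
  qed
  interpret drift_setting M Fl D \<alpha> a u \<gamma> \<kappa> B lam Fb N Y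
  proof (rule drift_setting.intro)
    show "prob_space M" by (fact M)
    show "prob_space N" by (fact C2(2))
    show "subalgebra M (Fl t)" for t using filt_sub by auto
    show "D t \<in> borel_measurable (Fl t)" for t by (rule Dm)
    show "0 \<le> D t \<omega>" if "\<omega> \<in> space M" for t \<omega> unfolding D_def using xstar in_X that by auto
    show "D t \<omega> \<le> Fb" if "\<omega> \<in> space M" for t \<omega>
    proof -
      have "\<bar>f (x t \<omega>)\<bar> \<le> Bf" "\<bar>f xstar\<bar> \<le> Bf" using Bf in_X that xstar by auto
      then show ?thesis unfolding D_def Fb_def by linarith
    qed
    show "Fb > 0"
    proof -
      have "\<bar>f xstar\<bar> \<le> Bf" using Bf xstar by auto
      then show ?thesis unfolding Fb_def by linarith
    qed
    show "a > 0" "u > 0" "0 \<le> \<gamma>" "\<gamma> \<le> 1" using step by auto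
    show "\<alpha> t = a / (u + real t) powr \<gamma>" for t using step by auto
    show "\<kappa> > 0" "B > 0" using C1 by auto
    show "AE \<omega> in M. \<alpha> t * B \<le> D t \<omega> \<longrightarrow>
          real_cond_exp M (Fl t) (\<lambda>\<omega>. D (Suc t) \<omega> - D t \<omega>) \<omega> \<le> - 2 * \<alpha> t * \<kappa>" for t
    proof -
      have e: "(\<lambda>\<omega>. D (Suc t) \<omega> - D t \<omega>) = (\<lambda>\<omega>. f (x (Suc t) \<omega>) - f (x t \<omega>))"
        unfolding D_def by auto
      show ?thesis unfolding e using C1(3) unfolding D_def by auto
    qed
    show "lam > 0" "Y \<in> borel_measurable N" "(\<integral>\<^sup>+ \<omega>. ennreal (exp (lam * Y \<omega>)) \<partial>N) < \<infinity>"
      using C2 by auto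
    show "\<omega> \<in> space N \<Longrightarrow> Y \<omega> \<ge> 0" for \<omega> using C2 by auto
    show "AE \<omega> in M. real_cond_exp M (Fl t)
            (indicator {\<omega>' \<in> space M. \<alpha> t * y \<le> \<bar>D (Suc t) \<omega>' - D t \<omega>'\<bar>}) \<omega>
          \<le> measure N {\<omega>' \<in> space N. y \<le> Y \<omega>'}" if "y \<ge> 0" for t y
    proof -
      have e: "{\<omega>' \<in> space M. \<alpha> t * y \<le> \<bar>D (Suc t) \<omega>' - D t \<omega>'\<bar>} =
          {\<omega>' \<in> space M. \<bar>f (x (Suc t) \<omega>') - f (x t \<omega>')\<bar> \<ge> \<alpha> t * y}"
        unfolding D_def by auto
      show ?thesis unfolding e using C2(6) that by auto
    qed
  qed
  obtain I J K where IJK: "I > 0" "J > 0" "K > 0"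
    "\<forall>t. \<forall>z\<ge>0. measure M {\<omega> \<in> space M. z \<le> D (Suc t) \<omega>} \<le> I * exp (- (J / \<alpha> t) * z)
       \<and> (\<integral>\<omega>. D (Suc t) \<omega> \<partial>M) \<le> K * \<alpha> t"
    using final by blast
  show ?thesis
    by (rule exI[of _ I], rule exI[of _ J], rule exI[of _ K]) (use IJK in \<open>simp add: D_def\<close>)
qed

end
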